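(* There is $r_0>0$ such that (1) $\Phi_S(\mathsf x)$ is uniformly bounded on $\{\mathsf x\in\mathbb{Q}_S:\mathrm d(\mathsf x)\le r_0\}$; and (2) for almost every $\mathsf x\in\mathbb{Q}_S$ with $\mathrm d(\mathsf x)>r_0$, $$\Phi_S(\mathsf x)=\frac1{L_S\zeta_S(2)}+O_{L_S}\big(\mathrm d(\mathsf x)^{-1}\log\mathrm d(\mathsf x)\big).$$
   Context: $S=\{\infty,p_1,\dots,p_s\}$ with distinct primes, $S_f=S\setminus\{\infty\}$, $\mathbb{Q}_S=\prod_{p\in S}\mathbb{Q}_p$ with Haar (product) measure, $\mathbb{N}_S=\{m\in\mathbb{N}:\gcd(m,p_1\cdots p_s)=1\}$, $\zeta_S(2)=\sum_{m\in\mathbb{N}_S}m^{-2}$, $L_p=p$ ($p$ odd), $L_2=8$, $L_S=\prod_{p\in S_f}L_p$, $\mathrm d(\mathsf x)=\prod_{p\in S}|x_p|_p$. For $\mathsf x\in\prod_{p\in S}(\mathbb{Q}_p\setminus\{0\})$, $\Phi_S(\mathsf x)=\mathrm d(\mathsf x)\sum_{m\in\mathbb{N}_{\mathsf x}}\varphi(m)/m^3$ ($\varphi$ Euler's totient), where $\mathbb{N}_{\mathsf x}=\{m\in\mathbb{N}_S:m\ge\mathrm d(\mathsf x),\ m\equiv\mathrm{sign}(x_\infty)\,x_p\prod_{p'\in S_f}|x_{p'}|_{p'}\bmod L_p\mathbb{Z}_p\ \text{for each }p\in S_f\}$; $\Phi_S(\mathsf x)=0$ if some component of $\mathsf x$ is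 $0$. *)

theory Defs
  imports "HOL-Probability.Probability" "HOL-Number_Theory.Number_Theory"
begin

text \<open>An element of Q_p is represented by its p-adic digit expansion
  x = sum over n in Z of a(n) p^n, with digits a(n) in {0..p-1} and a(n) = 0 for all
  sufficiently negative n. This representation is unique.\<close>

type_synonym padic = "int \<Rightarrow> nat"

definition qp_space :: "nat \<Rightarrow> padic set" where
  "qp_space p = {a. (\<forall>n. a n < p) \<and> (\<exists>N. \<forall>n<N. a n = 0)}"

definition padic_zero :: padic where
  "padic_zero = (\<lambda>_. 0)"

definition padic_val :: "padic \<Rightarrow> int" where
  "padic_val a = (LEAST n. a n \<noteq> 0)"

definition padic_abs :: "nat \<Rightarrow> padic \<Rightarrow> rat" where
  "padic_abs p a = (if a = padic_zero then 0 else (of_nat p) powi (- padic_val a))"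

definition padic_trunc :: "nat \<Rightarrow> int \<Rightarrow> padic \<Rightarrow> rat" where
  "padic_trunc p N a = (\<Sum>n\<in>{n. n < N \<and> a n \<noteq> 0}. of_nat (a n) * (of_nat p) powi n)"

definition in_LZp :: "nat \<Rightarrow> nat \<Rightarrow> rat \<Rightarrow> bool" where
  "in_LZp p L r \<longleftrightarrow> (\<exists>u v::int. v \<noteq> 0 \<and> \<not> int p dvd v \<and> int L dvd u \<and> r = of_int u / of_int v)"

text \<open>padic_cong p L x c m:  m is congruent to c * x modulo L Z_p  (x in Q_p, c rational,
  m integer, L a power of p), i.e. c*x - m in L Z_p.  Since x - trunc_N(x) is in p^N Z_p,
  this holds iff c * trunc_N(x) - m lies in L Z_p for all sufficiently large N.\<close>

definition padic_cong :: "nat \<Rightarrow> nat \<Rightarrow> padic \<Rightarrow> rat \<Rightarrow> int \<Rightarrow> bool" where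
  "padic_cong p L x c m \<longleftrightarrow>
     (\<forall>\<^sub>F N in sequentially. in_LZp p L (c * padic_trunc p (int N) x - of_int m))"

text \<open>Digit sequences with i.i.d. uniform digits: the (normalised) Haar measure on Z_p.\<close>

definition digit_measure :: "nat \<Rightarrow> (nat \<Rightarrow> nat) measure" where
  "digit_measure p = PiM UNIV (\<lambda>_. uniform_count_measure {..<p})"

definition padic_shift :: "int \<Rightarrow> (nat \<Rightarrow> nat) \<Rightarrow> padic" where
  "padic_shift j b = (\<lambda>n. if j \<le> n then b (nat (n - j)) else 0)"

definition qp_measurable_space :: "nat \<Rightarrow> padic measure" where
  "qp_measurable_space p = restrict_space (PiM UNIV (\<lambda>_::int. count_space UNIV)) (qp_space p)"

text \<open>Haar measure on Q_p normalised by mu(Z_p) = 1: the set p^j Z_p^* (units shifted by j,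
  first digit nonzero) carries mass p^(-j) times the digit measure; {0} is null.\<close>

definition padic_measure :: "nat \<Rightarrow> padic measure" where
  "padic_measure p =
     distr (density (count_space UNIV \<Otimes>\<^sub>M digit_measure p)
              (\<lambda>(j, b). ennreal (real p powr (- real_of_int j)) * indicator {b. b 0 \<noteq> 0} b))
           (qp_measurable_space p) (\<lambda>(j, b). padic_shift j b)"

text \<open>Q_S = R x prod_{p in S_f} Q_p; an element is (x_inf, x) with x p the p-component.\<close>

type_synonym QS = "real \<times> (nat \<Rightarrow> padic)"

definition QS_measure :: "nat set \<Rightarrow> QS measure" where
  "QS_measure Sf = lborel \<Otimes>\<^sub>M PiM Sf padic_measure"

definition dS :: "nat set \<Rightarrow> QS \<Rightarrow> real" where
  "dS Sf x = \<bar>fst x\<bar> * (\<Prod>p\<in>Sf. real_of_rat (padic_abs p (snd x p)))"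

definition Lp :: "nat \<Rightarrow> nat" where
  "Lp p = (if p = 2 then 8 else p)"

definition LS :: "nat set \<Rightarrow> nat" where
  "LS Sf = (\<Prod>p\<in>Sf. Lp p)"

definition NS :: "nat set \<Rightarrow> nat set" where
  "NS Sf = {m. 1 \<le> m \<and> coprime m (\<Prod>Sf)}"

definition zetaS2 :: "nat set \<Rightarrow> real" where
  "zetaS2 Sf = (\<Sum>m. if m \<in> NS Sf then 1 / (real m)^2 else 0)"

definition Nx :: "nat set \<Rightarrow> QS \<Rightarrow> nat set" where
  "Nx Sf x = {m \<in> NS Sf. dS Sf x \<le> real m \<and>
      (\<forall>p\<in>Sf. padic_cong p (Lp p) (snd x p)
                 ((if fst x < 0 then -1 else 1) * (\<Prod>q\<in>Sf. padic_abs q (snd x q))) (int m))}"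

definition PhiS :: "nat set \<Rightarrow> QS \<Rightarrow> real" where
  "PhiS Sf x = (if fst x = 0 \<or> (\<exists>p\<in>Sf. snd x p = padic_zero) then 0
     else dS Sf x * (\<Sum>m. if m \<in> Nx Sf x then real (totient m) / (real m)^3 else 0))"

end

theory Submission
  imports Defs
begin



definition mu :: "nat \<Rightarrow> real" where
  "mu e = (if e = \<Prod>(prime_factors e) then (-1) ^ card (prime_factors e) else 0)"

lemma prime_factors_prod_primes:
  fixes T :: "nat set"
  assumes "finite T" "\<forall>p\<in>T. prime p"
  shows "prime_factors (\<Prod>T) = T"
proof -
  have "0 \<notin> (\<lambda>x. x) ` T" using assms by auto
  then have "prime_factors (\<Prod>T) = \<Union>((prime_factors \<circ> (\<lambda>x. x)) ` T)"
    using prime_factors_prod[OF assms(1), of "\<lambda>x. x"] by simp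
  also have "\<dots> = T" using assms by (auto simp: prime_prime_factors)
  finally show ?thesis .
qed

lemma prod_subset_pf_dvd:
  fixes n :: nat
  assumes "n > 0" "T \<subseteq> prime_factors n"
  shows "\<Prod>T dvd n"
proof -
  have "\<Prod>T dvd \<Prod>(prime_factors n)"
    using assms by (intro prod_dvd_prod_subset) auto
  also have "\<Prod>(prime_factors n) dvd (\<Prod>p\<in>prime_factors n. p ^ multiplicity p n)"
    by (intro prod_dvd_prod) (auto simp: prime_factors_multiplicity dvd_power)
  also have "\<dots> = n" using prime_factorization_nat[OF assms(1)] by simp
  finally show ?thesis .
qed

lemma mu_sum_general:
  fixes n :: nat and g :: "nat \<Rightarrow> real"
  assumes n: "n > 0"
    and g: "\<And>T. finite T \<Longrightarrow> \<forall>p\<in>T. prime p \<Longrightarrow> g (\<Prod>T) = (\<Prod>p\<in>T. g p)"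
  shows "(\<Sum>e | e dvd n. mu e * g e) = (\<Prod>p\<in>prime_factors n. 1 - g p)"
proof -
  let ?SQ = "{e. e dvd n \<and> e = \<Prod>(prime_factors e)}"
  have fin: "finite {e. e dvd n}" using n by simp
  have "(\<Sum>e | e dvd n. mu e * g e) = (\<Sum>e\<in>?SQ. mu e * g e)"
    by (rule sum.mono_neutral_right[OF fin]) (auto simp: mu_def)
  also have "\<dots> = (\<Sum>T\<in>Pow (prime_factors n). (-1) ^ card T * g (\<Prod>T))"
  proof (rule sum.reindex_bij_witness[where i = "\<lambda>T. \<Prod>T" and j = prime_factors])
    fix T assume T: "T \<in> Pow (prime_factors n)"
    have fT: "finite T" using T finite_subset[of T "prime_factors n"] by auto
    have pT: "\<forall>p\<in>T. prime p" using T by auto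
    show "prime_factors (\<Prod>T) = T" by (rule prime_factors_prod_primes[OF fT pT])
    show "\<Prod>T \<in> ?SQ" using prod_subset_pf_dvd[OF n] T prime_factors_prod_primes[OF fT pT] by auto
  next
    fix e assume e: "e \<in> ?SQ"
    then show "\<Prod>(prime_factors e) = e" by auto
    have "e \<noteq> 0" using e n by auto
    then show "prime_factors e \<in> Pow (prime_factors n)" using e n by (auto intro: dvd_prime_factors[THEN subsetD])
    show "(-1) ^ card (prime_factors e) * g (\<Prod>(prime_factors e)) = mu e * g e"
      using e by (simp add: mu_def)
  qed
  also have "\<dots> = (\<Sum>T\<in>Pow (prime_factors n). (\<Prod>p\<in>T. - g p) * (\<Prod>p\<in>prime_factors n - T. 1))"
  proof (rule sum.cong[OF refl])
    fix T assume T: "T \<in> Pow (prime_factors n)"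
    have fT: "finite T" using T finite_subset[of T "prime_factors n"] by auto
    have pT: "\<forall>p\<in>T. prime p" using T by auto
    have "(\<Prod>p\<in>T. - g p) = (\<Prod>p\<in>T. (-1) * g p)" by simp
    also have "\<dots> = (\<Prod>p\<in>T. (-1::real)) * (\<Prod>p\<in>T. g p)" by (rule prod.distrib)
    also have "\<dots> = (-1) ^ card T * (\<Prod>p\<in>T. g p)" by simp
    finally show "(-1) ^ card T * g (\<Prod>T) = (\<Prod>p\<in>T. - g p) * (\<Prod>p\<in>prime_factors n - T. 1)"
      using g[OF fT pT] by simp
  qed
  also have "\<dots> = (\<Prod>p\<in>prime_factors n. - g p + 1)"
    by (rule prod_add[symmetric]) simp
  finally show ?thesis by simp
qed

lemma totient_mu:
  fixes m :: nat assumes "m > 0"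
  shows "real (totient m) / real m = (\<Sum>e | e dvd m. mu e * (1 / real e))"
proof -
  have "(\<Sum>e | e dvd m. mu e * (1 / real e)) = (\<Prod>p\<in>prime_factors m. 1 - 1 / real p)"
    by (rule mu_sum_general[OF assms]) (simp add: of_nat_prod prod_dividef)
  also have "\<dots> = real (totient m) / real m" using assms by (simp add: totient_formula2)
  finally show ?thesis by simp
qed

lemma mu_sum_1:
  fixes n :: nat assumes "n > 0"
  shows "(\<Sum>e | e dvd n. mu e) = (if n = 1 then 1 else 0)"
proof -
  have "(\<Sum>e | e dvd n. mu e * 1) = (\<Prod>p\<in>prime_factors n. 1 - 1)"
    by (rule mu_sum_general[OF assms]) simp
  moreover have "n \<noteq> 1 \<Longrightarrow> prime_factors n \<noteq> {}"
    using assms prime_factor_nat[of n] by (auto simp: prime_factors_dvd)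
  ultimately show ?thesis using assms
    by (cases "n = 1") (auto simp: prod_zero_iff card_gt_0_iff)
qed

lemma abs_mu_le: "\<bar>mu e\<bar> \<le> 1"
  by (simp add: mu_def)


lemma summable_inv_sq: "summable (\<lambda>k::nat. 1 / real k ^ 2)"
  using inverse_power_summable[of 2, where 'a=real] by (simp add: divide_inverse)

lemma summable_on_inv_sq: "(\<lambda>k::nat. 1 / real k ^ 2) summable_on A"
proof -
  have "(\<lambda>k::nat. 1 / real k ^ 2) summable_on UNIV"
    using summable_inv_sq by (subst summable_on_UNIV_nonneg_real_iff) auto
  then show ?thesis by (rule summable_on_subset) auto
qed

lemma class_tail_aux:
  fixes L k0 :: nat
  assumes L: "L \<ge> 1" and k0: "k0 \<ge> 1"
  defines "f \<equiv> (\<lambda>j::nat. 1 / real (k0 + j * L) ^ 2)"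
  shows "summable f" "1 / (real L * k0) \<le> suminf f" "suminf f \<le> 1 / (real L * k0) + 1 / real k0 ^ 2"
proof -
  have pos: "real (k0 + j * L) > 0" for j unfolding of_nat_0_less_iff using k0 by simp
  have "summable (\<lambda>j::nat. 1 / real (Suc j) ^ 2)"
    using summable_inv_sq by (subst summable_Suc_iff)
  moreover have "norm (f j) \<le> 1 / real (Suc j) ^ 2" for j
  proof -
    have "real (Suc j) \<le> real (k0 + j * L)" using k0 L
    proof -
      have "j \<le> j * L" using L by simp
      then show ?thesis using k0 by linarith
    qed
    then show ?thesis unfolding f_def
      by (auto intro!: divide_left_mono power_mono mult_pos_pos)
  qed
  ultimately show sf: "summable f" by (rule summable_comparison_test') 
  define t where "t = (\<lambda>j::nat. 1 / (real L * real (k0 + j * L)))"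
  have "t \<longlonglongrightarrow> 0" unfolding t_def using L by real_asymp
  then have tel: "(\<lambda>j. t j - t (Suc j)) sums (t 0)" using telescope_sums'[of t 0] by simp
  have teq: "t j - t (Suc j) = 1 / (real (k0 + j * L) * real (k0 + Suc j * L))" for j
  proof -
    have a: "real (k0 + Suc j * L) = real (k0 + j * L) + real L" by simp
    have gen: "1 / (l * A) - 1 / (l * (A + l)) = 1 / (A * (A + l))" if "A > 0" "l > 0" for A l :: real
      using that by (simp add: divide_simps)
    show ?thesis unfolding t_def a using gen[OF pos[of j], of "real L"] L by simp
  qed
  have "t j - t (Suc j) \<le> f j" for j
  proof -
    have "real (k0 + j * L) * real (k0 + j * L) \<le> real (k0 + j * L) * real (k0 + Suc j * L)"
      by (intro mult_left_mono) auto
    then show ?thesis unfolding teq f_def using pos[of j]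
      by (simp add: power2_eq_square divide_simps)
  qed
  then have "t 0 \<le> suminf f" using sums_le[OF _ tel summable_sums[OF sf]] by blast
  then show "1 / (real L * k0) \<le> suminf f" by (simp add: t_def)
  have "f (Suc j) \<le> t j - t (Suc j)" for j
  proof -
    have "real (k0 + j * L) * real (k0 + Suc j * L) \<le> real (k0 + Suc j * L) * real (k0 + Suc j * L)"
      by (intro mult_right_mono) auto
    then show ?thesis unfolding teq f_def using pos[of j] pos[of "Suc j"]
      by (simp add: power2_eq_square divide_simps del: of_nat_add of_nat_mult mult_Suc)
  qed
  then have "(\<Sum>j. f (Suc j)) \<le> t 0"
    using sums_le[OF _ summable_sums tel] sf by (simp add: summable_Suc_iff)
  moreover have "(\<Sum>j. f (Suc j)) = suminf f - f 0" using suminf_split_head[OF sf] .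
  ultimately show "suminf f \<le> 1 / (real L * k0) + 1 / real k0 ^ 2" by (simp add: t_def f_def)
qed

lemma real_tail_ineq:
  fixes s l k Z :: real
  assumes l: "l \<ge> 1" and Z: "Z \<ge> 1" and kZ: "Z \<le> k" and kU: "k \<le> Z + l + 1"
    and lo: "1 / (l * k) \<le> s" and up: "s \<le> 1 / (l * k) + 1 / k ^ 2"
  shows "\<bar>s - 1 / (l * Z)\<bar> \<le> 2 / Z ^ 2"
proof -
  have k0: "k > 0" using Z kZ by linarith
  have a: "1 / (l * k) \<le> 1 / (l * Z)" using l Z kZ by (intro divide_left_mono mult_left_mono mult_pos_pos) auto
  have b: "1 / k ^ 2 \<le> 1 / Z ^ 2" using Z kZ by (intro divide_left_mono power_mono) auto
  have c: "1 / (l * Z) - 1 / (l * k) = (k - Z) / (l * Z * k)" using l Z k0 by (simp add: divide_simps)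
  have d: "(k - Z) / (l * Z * k) \<le> (l + 1) / (l * Z * k)" using l Z k0 kU by (intro divide_right_mono) auto
  have e: "(l + 1) / (l * Z * k) \<le> (2 * l) / (l * Z * k)" using l Z k0 by (intro divide_right_mono) auto
  have f: "(2 * l) / (l * Z * k) = 2 / (Z * k)" using l by simp
  have g: "2 / (Z * k) \<le> 2 / Z ^ 2" using Z kZ by (intro divide_left_mono) (auto simp: power2_eq_square intro: mult_left_mono)
  show ?thesis using a b c d e f g lo up by (simp add: abs_le_iff)
qed

lemma class_tail:
  fixes L c :: nat and Z :: real
  assumes L: "L \<ge> 1" and Z: "Z \<ge> 1"
  shows "(\<lambda>k. 1 / real k ^ 2) summable_on {k. 1 \<le> k \<and> Z \<le> real k \<and> [k = c] (mod L)}"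
    and "\<bar>infsum (\<lambda>k. 1 / real k ^ 2) {k. 1 \<le> k \<and> Z \<le> real k \<and> [k = c] (mod L)} - 1 / (real L * Z)\<bar> \<le> 2 / Z ^ 2"
proof -
  show "(\<lambda>k. 1 / real k ^ 2) summable_on {k. 1 \<le> k \<and> Z \<le> real k \<and> [k = c] (mod L)}"
    by (rule summable_on_inv_sq)
  define KK where "KK = {k. 1 \<le> k \<and> Z \<le> real k \<and> [k = c] (mod L)}"
  define N where "N = nat \<lceil>Z\<rceil>"
  have NZ: "Z \<le> real N" "real N < Z + 1" using Z unfolding N_def by linarith+
  have N1: "N \<ge> 1" using NZ Z by linarith
  define k0 where "k0 = N + (c + L * N - N) mod L"
  have k0N: "N \<le> k0" "k0 < N + L" using L unfolding k0_def by auto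
  have LN: "N \<le> L * N" using L by simp
  have k0c: "[k0 = c] (mod L)"
  proof -
    have "k0 mod L = (N + (c + L * N - N)) mod L" unfolding k0_def by (simp add: mod_add_right_eq)
    also have "N + (c + L * N - N) = c + L * N" using LN by linarith
    also have "(c + L * N) mod L = c mod L" by simp
    finally show ?thesis by (simp add: cong_def)
  qed
  have Kimg: "KK = (\<lambda>j. k0 + j * L) ` UNIV"
  proof (intro equalityI subsetI)
    fix k assume "k \<in> KK"
    then have k: "1 \<le> k" "Z \<le> real k" "[k = c] (mod L)" by (auto simp: KK_def)
    have kN: "N \<le> k" using k(2) unfolding N_def by linarith
    have "[k = k0] (mod L)" using k(3) k0c by (meson cong_sym cong_trans)
    then have "[k - N + N = k0 - N + N] (mod L)" using kN k0N by simp
    then have "[k - N = k0 - N] (mod L)" using cong_add_rcancel_nat by blast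
    then have "(k - N) mod L = k0 - N" using k0N by (simp add: cong_def)
    then have "k = k0 + ((k - N) div L) * L" using kN k0N div_mult_mod_eq[of "k - N" L] by linarith
    then show "k \<in> range (\<lambda>j. k0 + j * L)" by blast
  next
    fix k assume "k \<in> range (\<lambda>j. k0 + j * L)"
    then obtain j where j: "k = k0 + j * L" by blast
    have "[k0 + j * L = k0] (mod L)" by (simp add: cong_def)
    then have "[k = c] (mod L)" using j k0c by (auto intro: cong_trans)
    moreover have "Z \<le> real k"
    proof -
      have "N \<le> k" using j k0N by simp
      then have "real N \<le> real k" by linarith
      then show ?thesis using NZ by linarith
    qed
    moreover have "1 \<le> k" using j N1 k0N by simp
    ultimately show "k \<in> KK" by (simp add: KK_def)
  qed
  have inj: "inj (\<lambda>j. k0 + j * L)" using L by (auto simp: inj_def)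
  define f where "f = (\<lambda>j::nat. 1 / real (k0 + j * L) ^ 2)"
  have k01: "k0 \<ge> 1" using N1 k0N by simp
  note aux = class_tail_aux[OF L k01, folded f_def]
  have "infsum (\<lambda>k. 1 / real k ^ 2) KK = infsum f UNIV"
    unfolding Kimg using infsum_reindex[OF inj, of "\<lambda>k. 1 / real k ^ 2"] by (simp add: f_def o_def)
  also have "infsum f UNIV = suminf f"
    by (rule infsumI, rule sums_nonneg_imp_has_sum[OF summable_sums[OF aux(1)]]) (simp add: f_def)
  finally have eq: "infsum (\<lambda>k. 1 / real k ^ 2) KK = suminf f" .
  have "\<bar>suminf f - 1 / (real L * Z)\<bar> \<le> 2 / Z ^ 2"
    by (rule real_tail_ineq) (use L Z NZ k0N aux in auto)
  then show "\<bar>infsum (\<lambda>k. 1 / real k ^ 2) {k. 1 \<le> k \<and> Z \<le> real k \<and> [k = c] (mod L)} - 1 / (real L * Z)\<bar> \<le> 2 / Z ^ 2"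
    using eq by (simp add: KK_def)
qed
lemma infsum_diff_real:
  fixes f g :: "'a \<Rightarrow> real"
  assumes "f summable_on A" "g summable_on A"
  shows "infsum (\<lambda>x. f x - g x) A = infsum f A - infsum g A"
proof -
  have "infsum (\<lambda>x. f x + (- g x)) A = infsum f A + infsum (\<lambda>x. - g x) A"
    by (rule infsum_add) (use assms in \<open>auto simp: summable_on_uminus\<close>)
  then show ?thesis by (simp add: infsum_uminus)
qed

lemma base_summable: "(\<lambda>(e,k). 1 / (real e ^ 2 * real k ^ 2)) summable_on (UNIV :: (nat \<times> nat) set)"
proof -
  define Z2 where "Z2 = infsum (\<lambda>k::nat. 1 / real k ^ 2) UNIV"
  have Z2nn: "Z2 \<ge> 0" unfolding Z2_def by (rule infsum_nonneg) simp
  have eqf: "norm ((\<lambda>(e,k). 1 / (real e ^ 2 * real k ^ 2)) (e, k)) = 1 / real e ^ 2 * (1 / real k ^ 2)" for e k :: nat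
    by (simp add: power_mult_distrib)
  have inner: "(\<lambda>k. 1 / real e ^ 2 * (1 / real k ^ 2)) summable_on UNIV" for e :: nat
    by (rule summable_on_cmult_right[OF summable_on_inv_sq])
  have ieq: "norm (infsum (\<lambda>k. 1 / real e ^ 2 * (1 / real k ^ 2)) UNIV) = 1 / real e ^ 2 * Z2" for e :: nat
    unfolding infsum_cmult_right' Z2_def[symmetric] using Z2nn by simp
  have outer: "(\<lambda>e::nat. 1 / real e ^ 2 * Z2) summable_on UNIV"
    by (rule summable_on_cmult_left[OF summable_on_inv_sq])
  have "(\<lambda>x. norm ((\<lambda>(e,k). 1 / (real e ^ 2 * real k ^ 2)) x)) summable_on Sigma (UNIV :: nat set) (\<lambda>_. UNIV :: nat set)"
    apply (rule Infinite_Sum.abs_summable_on_Sigma_iff[THEN iffD2])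
    apply (simp only: eqf ieq)
    using inner outer by blast
  then show ?thesis using abs_summable_summable by fastforce
qed
lemma pair_summable:
  fixes h :: "nat \<times> nat \<Rightarrow> real"
  assumes "\<And>e k. (e, k) \<in> S \<Longrightarrow> \<bar>h (e, k)\<bar> \<le> 1 / (real e ^ 2 * real k ^ 2)"
  shows "h summable_on S"
proof -
  have "(\<lambda>(e,k). 1 / (real e ^ 2 * real k ^ 2)) summable_on S"
    by (rule summable_on_subset[OF base_summable]) simp
  then have "(\<lambda>x. norm ((\<lambda>(e,k). 1 / (real e ^ 2 * real k ^ 2)) x)) summable_on S"
    by (rule summable_on_iff_abs_summable_on_real[THEN iffD1])
  then have "(\<lambda>x. norm (h x)) summable_on S"
  proof (rule Infinite_Sum.abs_summable_on_comparison_test)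
    fix x assume "x \<in> S"
    then obtain e k where x: "x = (e, k)" "(e, k) \<in> S" by (cases x) auto
    show "norm (h x) \<le> norm ((\<lambda>(e,k). 1 / (real e ^ 2 * real k ^ 2)) x)"
      using assms[OF x(2)] unfolding x by simp
  qed
  then show ?thesis using abs_summable_summable by fastforce
qed


lemma mu_pair_bound:
  fixes e k :: nat
  shows "\<bar>mu e / (real e ^ 3 * real k ^ 2)\<bar> \<le> 1 / (real e ^ 2 * real k ^ 2)"
proof (cases "e = 0 \<or> k = 0")
  case True then show ?thesis by auto
next
  case False
  then have pos: "real e ^ 2 * real k ^ 2 > 0" by simp
  have "\<bar>mu e / (real e ^ 3 * real k ^ 2)\<bar> = \<bar>mu e\<bar> / (real e ^ 3 * real k ^ 2)"
    by (simp add: abs_div_pos)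
  also have "\<dots> \<le> 1 / (real e ^ 3 * real k ^ 2)"
    using abs_mu_le[of e] False by (intro divide_right_mono) auto
  also have "\<dots> \<le> 1 / (real e ^ 2 * real k ^ 2)"
  proof (rule divide_left_mono)
    have "real e ^ 2 \<le> real e ^ 3" using False by (intro power_increasing) auto
    then show "real e ^ 2 * real k ^ 2 \<le> real e ^ 3 * real k ^ 2" by (intro mult_right_mono) auto
  qed (use False in \<open>auto intro!: mult_pos_pos\<close>)
  finally show ?thesis .
qed

lemma swap_totient:
  fixes A :: "nat set"
  assumes A: "\<And>m. m \<in> A \<Longrightarrow> 1 \<le> m"
  shows "infsum (\<lambda>m. real (totient m) / real m ^ 3) A =
         infsum (\<lambda>e. mu e / real e ^ 3 * infsum (\<lambda>k. 1 / real k ^ 2) {k. 1 \<le> k \<and> e * k \<in> A}) {e. 1 \<le> e}"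
proof -
  define h where "h = (\<lambda>(e,k). mu e / (real e ^ 3 * real k ^ 2))"
  define S1 where "S1 = Sigma {e::nat. 1 \<le> e} (\<lambda>e. {k. 1 \<le> k \<and> e * k \<in> A})"
  define S2 where "S2 = Sigma A (\<lambda>m. {e. e dvd m})"
  define h2 where "h2 = (\<lambda>(m,e). mu e / (real e * real m ^ 2))"
  have hs: "h summable_on S1"
  proof (rule pair_summable)
    fix e k :: nat
    show "\<bar>h (e, k)\<bar> \<le> 1 / (real e ^ 2 * real k ^ 2)"
      unfolding h_def case_prod_conv by (rule mu_pair_bound)
  qed
  have eqs: "h summable_on S1 \<longleftrightarrow> h2 summable_on S2" "infsum h S1 = infsum h2 S2"
  proof -
    let ?j = "\<lambda>(e,k). (e * k, e)" and ?i = "\<lambda>(m,e). (e, m div e)"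
    have g1: "?i (?j a) = a" "?j a \<in> S2" "h2 (?j a) = h a" if "a \<in> S1" for a
    proof -
      obtain e k where a0: "a = (e, k)" by (cases a)
      then have a: "a = (e, k)" "1 \<le> e" "1 \<le> k" "e * k \<in> A" using that by (auto simp: S1_def)
      show "?i (?j a) = a" using a by simp
      show "?j a \<in> S2" using a by (simp add: S2_def)
      have "real e * (real e * real k) ^ 2 = real e ^ 3 * real k ^ 2"
        by (simp add: power_mult_distrib power3_eq_cube power2_eq_square)
      then show "h2 (?j a) = h a" using a by (simp add: h_def h2_def)
    qed
    have g2: "?j (?i b) = b" "?i b \<in> S1" if "b \<in> S2" for b
    proof -
      obtain m e where b0: "b = (m, e)" by (cases b)
      then have b: "b = (m, e)" "m \<in> A" "e dvd m" using that by (auto simp: S2_def)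
      have m1: "1 \<le> m" using A b by auto
      have e0: "e \<noteq> 0" using b m1 by auto
      have md: "e * (m div e) = m" using b by simp
      have "m div e \<noteq> 0" using md m1 by (metis mult_0_right not_one_le_zero)
      then show "?j (?i b) = b" "?i b \<in> S1" using b md e0 by (auto simp: S1_def)
    qed
    show "h summable_on S1 \<longleftrightarrow> h2 summable_on S2"
      by (rule summable_on_reindex_bij_witness[of S1 ?i ?j S2 h2 h]) (use g1 g2 in auto)
    show "infsum h S1 = infsum h2 S2"
      by (rule infsum_reindex_bij_witness[of S1 ?i ?j S2 h2 h]) (use g1 g2 in auto)
  qed
  have h2s: "h2 summable_on S2" using hs eqs(1) by simp
  have "infsum (\<lambda>m. real (totient m) / real m ^ 3) A = infsum (\<lambda>m. infsum (\<lambda>e. h2 (m, e)) {e. e dvd m}) A"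
  proof (rule infsum_cong)
    fix m assume m: "m \<in> A"
    then have m1: "m > 0" using A by fastforce
    have "infsum (\<lambda>e. h2 (m, e)) {e. e dvd m} = (\<Sum>e | e dvd m. mu e / (real e * real m ^ 2))"
      using m1 by (simp add: h2_def)
    also have "\<dots> = (\<Sum>e | e dvd m. mu e * (1 / real e)) * (1 / real m ^ 2)"
      unfolding sum_distrib_right by (rule sum.cong) auto
    also have "\<dots> = real (totient m) / real m * (1 / real m ^ 2)"
      using totient_mu[OF m1] by simp
    also have "\<dots> = real (totient m) / real m ^ 3"
      by (simp add: power3_eq_cube power2_eq_square)
    finally show "real (totient m) / real m ^ 3 = infsum (\<lambda>e. h2 (m, e)) {e. e dvd m}" by simp
  qed
  also have "\<dots> = infsum h2 S2"
    unfolding S2_def using infsum_Sigma'_banach[of "\<lambda>m e. h2 (m, e)" A "\<lambda>m. {e. e dvd m}"] h2s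
    by (simp add: S2_def case_prod_beta)
  also have "\<dots> = infsum h S1" using eqs(2) by simp
  also have "\<dots> = infsum (\<lambda>e. infsum (\<lambda>k. h (e, k)) {k. 1 \<le> k \<and> e * k \<in> A}) {e. 1 \<le> e}"
    unfolding S1_def using infsum_Sigma'_banach[of "\<lambda>e k. h (e, k)" "{e. 1 \<le> e}" "\<lambda>e. {k. 1 \<le> k \<and> e * k \<in> A}"] hs
    by (simp add: S1_def case_prod_beta)
  also have "\<dots> = infsum (\<lambda>e. mu e / real e ^ 3 * infsum (\<lambda>k. 1 / real k ^ 2) {k. 1 \<le> k \<and> e * k \<in> A}) {e. 1 \<le> e}"
  proof (rule infsum_cong)
    fix e :: nat
    have "infsum (\<lambda>k. h (e, k)) {k. 1 \<le> k \<and> e * k \<in> A} = infsum (\<lambda>k. mu e / real e ^ 3 * (1 / real k ^ 2)) {k. 1 \<le> k \<and> e * k \<in> A}"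
      by (simp add: h_def)
    also have "\<dots> = mu e / real e ^ 3 * infsum (\<lambda>k. 1 / real k ^ 2) {k. 1 \<le> k \<and> e * k \<in> A}"
      by (rule infsum_cmult_right')
    finally show "infsum (\<lambda>k. h (e, k)) {k. 1 \<le> k \<and> e * k \<in> A} = mu e / real e ^ 3 * infsum (\<lambda>k. 1 / real k ^ 2) {k. 1 \<le> k \<and> e * k \<in> A}" .
  qed
  finally show ?thesis .
qed


definition NC :: "nat \<Rightarrow> nat set" where "NC L = {e. 1 \<le> e \<and> coprime e L}"

lemma mu_zeta_inverse:
  "infsum (\<lambda>e. mu e / real e ^ 2) (NC L) * infsum (\<lambda>m. 1 / real m ^ 2) (NC L) = 1"
proof -
  define g where "g = (\<lambda>(e,m). mu e / (real e ^ 2 * real m ^ 2))"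
  define g2 where "g2 = (\<lambda>(n,e). mu e / real n ^ 2)"
  define S1 where "S1 = Sigma (NC L) (\<lambda>_. NC L)"
  define S2 where "S2 = Sigma (NC L) (\<lambda>n. {e. e dvd n})"
  have gs: "g summable_on S1"
  proof (rule pair_summable)
    fix e k :: nat
    show "\<bar>g (e, k)\<bar> \<le> 1 / (real e ^ 2 * real k ^ 2)"
      unfolding g_def case_prod_conv using abs_mu_le[of e]
      by (simp add: abs_div_pos divide_right_mono)
  qed
  let ?j = "\<lambda>(e,m). (e * m, e)" and ?i = "\<lambda>(n,e). (e, n div e)"
  have g1: "?i (?j a) = a" "?j a \<in> S2" "g2 (?j a) = g a" if "a \<in> S1" for a
  proof -
    obtain e m where a0: "a = (e, m)" by (cases a)
    then have a: "a = (e, m)" "1 \<le> e" "1 \<le> m" "coprime e L" "coprime m L" using that by (auto simp: S1_def NC_def)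
    show "?i (?j a) = a" using a by simp
    show "?j a \<in> S2" using a by (simp add: S2_def NC_def)
    show "g2 (?j a) = g a" using a by (simp add: g_def g2_def power_mult_distrib)
  qed
  have g2': "?j (?i b) = b" "?i b \<in> S1" if "b \<in> S2" for b
  proof -
    obtain n e where b0: "b = (n, e)" by (cases b)
    then have b: "b = (n, e)" "1 \<le> n" "coprime n L" "e dvd n" using that by (auto simp: S2_def NC_def)
    have md: "e * (n div e) = n" using b by simp
    have e0: "e \<noteq> 0" using b by auto
    have d0: "n div e \<noteq> 0" using md b by (metis mult_0_right not_one_le_zero)
    have "coprime (e * (n div e)) L" using md b by simp
    then have "coprime e L" "coprime (n div e) L" by (simp_all add: coprime_mult_left_iff)
    then show "?j (?i b) = b" "?i b \<in> S1" using b md e0 d0 by (auto simp: S1_def NC_def)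
  qed
  have eqs: "g summable_on S1 \<longleftrightarrow> g2 summable_on S2" "infsum g S1 = infsum g2 S2"
    by (rule summable_on_reindex_bij_witness[of S1 ?i ?j S2 g2 g], use g1 g2' in auto)
       (rule infsum_reindex_bij_witness[of S1 ?i ?j S2 g2 g], use g1 g2' in auto)
  have g2s: "g2 summable_on S2" using gs eqs(1) by simp
  have "infsum (\<lambda>e. mu e / real e ^ 2) (NC L) * infsum (\<lambda>m. 1 / real m ^ 2) (NC L)
      = infsum (\<lambda>e. mu e / real e ^ 2 * infsum (\<lambda>m. 1 / real m ^ 2) (NC L)) (NC L)"
    by (rule infsum_cmult_left'[symmetric])
  also have "\<dots> = infsum (\<lambda>e. infsum (\<lambda>m. g (e, m)) (NC L)) (NC L)"
  proof (rule infsum_cong)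
    fix e
    show "mu e / real e ^ 2 * infsum (\<lambda>m. 1 / real m ^ 2) (NC L) = infsum (\<lambda>m. g (e, m)) (NC L)"
      unfolding g_def case_prod_conv using infsum_cmult_right'[of "mu e / real e ^ 2" "\<lambda>m. 1 / real m ^ 2" "NC L"]
      by simp
  qed
  also have "\<dots> = infsum g S1"
    unfolding S1_def using infsum_Sigma'_banach[of "\<lambda>e m. g (e, m)" "NC L" "\<lambda>_. NC L"] gs
    by (simp add: S1_def case_prod_beta)
  also have "\<dots> = infsum g2 S2" by (rule eqs(2))
  also have "\<dots> = infsum (\<lambda>n. infsum (\<lambda>e. g2 (n, e)) {e. e dvd n}) (NC L)"
    unfolding S2_def using infsum_Sigma'_banach[of "\<lambda>n e. g2 (n, e)" "NC L" "\<lambda>n. {e. e dvd n}"] g2s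
    by (simp add: S2_def case_prod_beta)
  also have "\<dots> = infsum (\<lambda>n. if n = 1 then 1 else 0) (NC L)"
  proof (rule infsum_cong)
    fix n assume n: "n \<in> NC L"
    then have n0: "n > 0" by (auto simp: NC_def)
    have "infsum (\<lambda>e. g2 (n, e)) {e. e dvd n} = (\<Sum>e | e dvd n. mu e) / real n ^ 2"
      using n0 by (simp add: g2_def sum_divide_distrib)
    also have "\<dots> = (if n = 1 then 1 else 0)" using mu_sum_1[OF n0] by simp
    finally show "infsum (\<lambda>e. g2 (n, e)) {e. e dvd n} = (if n = 1 then 1 else 0)" .
  qed
  also have "\<dots> = infsum (\<lambda>n. if n = 1 then 1 else 0) {1::nat}"
    by (rule infsum_cong_neutral) (auto simp: NC_def)
  also have "\<dots> = 1" by simp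
  finally show ?thesis .
qed


lemma summable_by_inv_sq:
  fixes f :: "nat \<Rightarrow> real"
  assumes "\<And>e. e \<in> S \<Longrightarrow> \<bar>f e\<bar> \<le> C / real e ^ 2"
  shows "f summable_on S"
proof -
  have "(\<lambda>e. C * (1 / real e ^ 2)) summable_on S"
    by (rule summable_on_cmult_right[OF summable_on_inv_sq])
  then have "(\<lambda>e. norm (C * (1 / real e ^ 2))) summable_on S"
    by (rule summable_on_iff_abs_summable_on_real[THEN iffD1])
  then have "(\<lambda>e. norm (f e)) summable_on S"
  proof (rule Infinite_Sum.abs_summable_on_comparison_test)
    fix e assume "e \<in> S"
    have "C / real e ^ 2 \<le> \<bar>C\<bar> / real e ^ 2" by (rule divide_right_mono) auto
    then show "norm (f e) \<le> norm (C * (1 / real e ^ 2))" using assms[OF \<open>e \<in> S\<close>] by (simp add: abs_mult)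
  qed
  then show ?thesis using abs_summable_summable by fastforce
qed

lemma partial_inv_sq:
  fixes n M :: nat
  assumes n: "n \<ge> 1" and M: "n \<le> M"
  shows "(\<Sum>e\<in>{n+1..M}. 1 / real e ^ 2) \<le> 1 / real n - 1 / real M"
  using M
proof (induction M rule: dec_induct)
  case base then show ?case by simp
next
  case (step M)
  have M1: "M \<ge> 1" using step n by simp
  have "{n+1..Suc M} = insert (Suc M) {n+1..M}" using step by auto
  then have "(\<Sum>e\<in>{n+1..Suc M}. 1 / real e ^ 2) = 1 / real (Suc M) ^ 2 + (\<Sum>e\<in>{n+1..M}. 1 / real e ^ 2)"
    by simp
  also have "\<dots> \<le> 1 / real (Suc M) ^ 2 + (1 / real n - 1 / real M)" using step by simp
  also have "1 / real (Suc M) ^ 2 \<le> 1 / real M - 1 / real (Suc M)"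
  proof -
    have "1 / real M - 1 / real (Suc M) = 1 / (real M * real (Suc M))"
      using M1 by (simp add: divide_simps)
    also have "1 / real (Suc M) ^ 2 \<le> 1 / (real M * real (Suc M))"
      using M1 by (intro divide_left_mono) (auto simp: power2_eq_square intro!: mult_pos_pos)
    finally show ?thesis by simp
  qed
  finally show ?case by simp
qed

lemma tail_inv_sq:
  fixes n :: nat assumes n: "n \<ge> 1"
  shows "infsum (\<lambda>e. 1 / real e ^ 2) {e. n + 1 \<le> e} \<le> 1 / real n"
proof (rule infsum_le_finite_sums[OF summable_on_inv_sq])
  fix F assume F: "finite F" "F \<subseteq> {e. n + 1 \<le> e}"
  show "sum (\<lambda>e. 1 / real e ^ 2) F \<le> 1 / real n"
  proof (cases "F = {}")
    case True then show ?thesis by simp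
  next
    case False
    define M where "M = Max F"
    have MF: "M \<in> F" using F False by (simp add: M_def)
    have nM: "n \<le> M" using MF F by auto
    have sub: "F \<subseteq> {n+1..M}" using F by (auto simp: M_def)
    have "sum (\<lambda>e. 1 / real e ^ 2) F \<le> (\<Sum>e\<in>{n+1..M}. 1 / real e ^ 2)"
      by (rule sum_mono2) (use sub in auto)
    also have "\<dots> \<le> 1 / real n - 1 / real M" by (rule partial_inv_sq[OF n nM])
    also have "\<dots> \<le> 1 / real n" by simp
    finally show ?thesis .
  qed
qed

lemma harm_le_ln:
  fixes n :: nat assumes "n \<ge> 1"
  shows "(\<Sum>e\<in>{1..n}. 1 / real e) \<le> 1 + ln (real n)"
proof -
  have "harm n - ln (real n) \<le> harm 1 - ln (real (1::nat))"
    using euler_mascheroni_sequence_decreasing[of 1 n] assms by simp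
  moreover have "harm n = (\<Sum>e\<in>{1..n}. 1 / real e)" by (simp add: harm_def divide_inverse)
  ultimately show ?thesis by (simp add: harm_def)
qed

lemma class_tail2:
  fixes L c :: nat and Z :: real
  assumes L: "L \<ge> 1" and Z: "Z > 0"
  shows "\<bar>infsum (\<lambda>k. 1 / real k ^ 2) {k. 1 \<le> k \<and> Z \<le> real k \<and> [k = c] (mod L)} - 1 / (real L * Z)\<bar>
           \<le> (if Z \<ge> 1 then 2 / Z ^ 2 else 3 / Z)"
proof (cases "Z \<ge> 1")
  case True then show ?thesis using class_tail(2)[OF L True] by simp
next
  case False
  have eq: "{k. 1 \<le> k \<and> Z \<le> real k \<and> [k = c] (mod L)} = {k. 1 \<le> k \<and> 1 \<le> real k \<and> [k = c] (mod L)}"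
    using False by auto
  have h: "\<bar>infsum (\<lambda>k. 1 / real k ^ 2) {k. 1 \<le> k \<and> 1 \<le> real k \<and> [k = c] (mod L)} - 1 / (real L * 1)\<bar> \<le> 2 / 1 ^ 2"
    by (rule class_tail(2)[OF L]) simp
  have a: "\<bar>1 / real L - 1 / (real L * Z)\<bar> \<le> 1 / Z"
  proof -
    have "1 / (real L * Z) \<le> 1 / Z" using L Z by (intro divide_left_mono) (auto intro: mult_pos_pos)
    moreover have "1 / real L \<le> 1 / (real L * Z)" using L Z False by (intro divide_left_mono) (auto intro: mult_pos_pos)
    moreover have "0 \<le> 1 / real L" by simp
    ultimately show ?thesis unfolding abs_le_iff by linarith
  qed
  have b: "2 \<le> 2 / Z" using Z False by (simp add: divide_simps)
  show ?thesis using h a b False unfolding eq by (simp add: abs_le_iff)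
qed


lemma class_shift:
  fixes L b e :: nat and Y :: real
  assumes L: "L \<ge> 1" and e: "e \<ge> 1" and eL: "coprime e L"
  obtains c where "{k. 1 \<le> k \<and> 1 \<le> e * k \<and> Y \<le> real (e * k) \<and> [e * k = b] (mod L)}
                  = {k. 1 \<le> k \<and> Y / real e \<le> real k \<and> [k = c] (mod L)}"
proof -
  obtain x where x: "[e * x = 1] (mod L)" using cong_solve_coprime_nat[OF eL] by auto
  define c where "c = x * b"
  have cg: "[e * k = b] (mod L) \<longleftrightarrow> [k = c] (mod L)" for k
  proof
    assume h: "[e * k = b] (mod L)"
    then have "[x * (e * k) = x * b] (mod L)" by (rule cong_scalar_left)
    moreover have "[x * (e * k) = k] (mod L)"
    proof -
      have "[(e * x) * k = 1 * k] (mod L)" using x by (rule cong_scalar_right)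
      then show ?thesis by (simp add: ac_simps)
    qed
    ultimately show "[k = c] (mod L)" unfolding c_def by (meson cong_sym cong_trans)
  next
    assume h: "[k = c] (mod L)"
    then have "[e * k = e * (x * b)] (mod L)" unfolding c_def by (rule cong_scalar_left)
    moreover have "[e * (x * b) = b] (mod L)"
    proof -
      have "[(e * x) * b = 1 * b] (mod L)" using x by (rule cong_scalar_right)
      then show ?thesis by (simp add: ac_simps)
    qed
    ultimately show "[e * k = b] (mod L)" by (rule cong_trans)
  qed
  have ye: "Y \<le> real (e * k) \<longleftrightarrow> Y / real e \<le> real k" for k
    using e by (simp add: divide_le_eq mult.commute)
  have all: "(1 \<le> k \<and> 1 \<le> e * k \<and> Y \<le> real (e * k) \<and> [e * k = b] (mod L)) \<longleftrightarrow>
              (1 \<le> k \<and> Y / real e \<le> real k \<and> [k = c] (mod L))" for k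
  proof -
    have "1 \<le> k \<Longrightarrow> 1 \<le> e * k" using e by simp
    then show ?thesis using cg[of k] ye[of k] by blast
  qed
  have "{k. 1 \<le> k \<and> 1 \<le> e * k \<and> Y \<le> real (e * k) \<and> [e * k = b] (mod L)}
                  = {k. 1 \<le> k \<and> Y / real e \<le> real k \<and> [k = c] (mod L)}"
    using all by blast
  then show ?thesis by (rule that)
qed

theorem core_estimate:
  fixes L b :: nat and Y :: real
  assumes L: "L \<ge> 1" and b: "coprime b L" and Y: "Y \<ge> 3"
  shows "\<bar>Y * infsum (\<lambda>m. real (totient m) / real m ^ 3) {m. 1 \<le> m \<and> Y \<le> real m \<and> [m = b] (mod L)}
           - 1 / (real L * infsum (\<lambda>m. 1 / real m ^ 2) (NC L))\<bar> \<le> 10 * (ln Y / Y)"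
proof -
  define A where "A = {m. 1 \<le> m \<and> Y \<le> real m \<and> [m = b] (mod L)}"
  define F where "F = infsum (\<lambda>m. real (totient m) / real m ^ 3) A"
  define Zt where "Zt = infsum (\<lambda>m. 1 / real m ^ 2) (NC L)"
  define M where "M = infsum (\<lambda>e. mu e / real e ^ 2) (NC L)"
  define E1 where "E1 = {e::nat. 1 \<le> e}"
  define T where "T = (\<lambda>e. infsum (\<lambda>k. 1 / real k ^ 2) {k. 1 \<le> k \<and> e * k \<in> A})"
  define P where "P = (\<lambda>e::nat. if coprime e L then real e / (real L * Y) else 0)"
  define Z2 where "Z2 = infsum (\<lambda>k::nat. 1 / real k ^ 2) UNIV"
  have Ypos: "Y > 0" using Y by simp
  have MZ: "M * Zt = 1" unfolding M_def Zt_def by (rule mu_zeta_inverse)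
  have Zt0: "Zt \<noteq> 0" using MZ by auto
  have "M = 1 / Zt" using MZ Zt0 by (simp add: eq_divide_eq)
  then have main: "1 / (real L * Zt) = M / real L" by simp
  have swap: "F = infsum (\<lambda>e. mu e / real e ^ 3 * T e) E1"
    unfolding F_def T_def E1_def by (rule swap_totient) (simp add: A_def)
  have Tnn: "T e \<ge> 0" for e unfolding T_def by (rule infsum_nonneg) simp
  have TZ: "T e \<le> Z2" for e unfolding T_def Z2_def
    by (rule infsum_mono_neutral) (auto intro: summable_on_inv_sq)
  have Z2nn: "Z2 \<ge> 0" using Tnn TZ order_trans by blast
  have s1: "(\<lambda>e. mu e / real e ^ 3 * T e) summable_on E1"
  proof (rule summable_by_inv_sq[where C=Z2])
    fix e assume "e \<in> E1"
    then have e1: "e \<ge> 1" by (simp add: E1_def)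
    have h2: "T e / real e ^ 3 \<le> Z2 / real e ^ 3" by (rule divide_right_mono[OF TZ]) simp
    have h3: "0 \<le> T e / real e ^ 3" using Tnn[of e] by simp
    have "mu e / real e ^ 3 * T e = mu e * (T e / real e ^ 3)" by simp
    then have "\<bar>mu e / real e ^ 3 * T e\<bar> = \<bar>mu e\<bar> * (T e / real e ^ 3)" using h3 by (simp only: abs_mult abs_of_nonneg)
    also have "\<dots> \<le> 1 * (Z2 / real e ^ 3)"
      by (rule mult_mono[OF abs_mu_le h2]) (use h3 in auto)
    also have "\<dots> = 1 / real e ^ 3 * Z2" by simp
    also have "\<dots> \<le> 1 / real e ^ 2 * Z2"
      using e1 Z2nn by (intro mult_right_mono divide_left_mono power_increasing) auto
    finally show "\<bar>mu e / real e ^ 3 * T e\<bar> \<le> Z2 / real e ^ 2" by simp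
  qed
  have s2: "(\<lambda>e. mu e / real e ^ 3 * P e) summable_on E1"
  proof (rule summable_by_inv_sq[where C="1 / (real L * Y)"])
    fix e assume "e \<in> E1"
    then have e1: "e \<ge> 1" by (simp add: E1_def)
    have p0: "0 \<le> P e / real e ^ 3" unfolding P_def using L Ypos by auto
    have p1: "P e / real e ^ 3 \<le> (real e / (real L * Y)) / real e ^ 3"
      unfolding P_def using L Ypos e1 by (auto intro!: divide_right_mono)
    have "mu e / real e ^ 3 * P e = mu e * (P e / real e ^ 3)" by simp
    then have "\<bar>mu e / real e ^ 3 * P e\<bar> = \<bar>mu e\<bar> * (P e / real e ^ 3)" using p0 by (simp only: abs_mult abs_of_nonneg)
    also have "\<dots> \<le> 1 * ((real e / (real L * Y)) / real e ^ 3)"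
      by (rule mult_mono[OF abs_mu_le p1]) (use p0 in auto)
    also have "\<dots> = 1 / real e ^ 3 * (real e / (real L * Y))" by simp
    finally have "\<bar>mu e / real e ^ 3 * P e\<bar> \<le> 1 / real e ^ 3 * (real e / (real L * Y))" .
    also have "\<dots> = 1 / (real L * Y) / real e ^ 2"
      using e1 by (simp add: power2_eq_square power3_eq_cube)
    finally show "\<bar>mu e / real e ^ 3 * P e\<bar> \<le> 1 / (real L * Y) / real e ^ 2" .
  qed
  have mainsum: "M / (real L * Y) = infsum (\<lambda>e. mu e / real e ^ 3 * P e) E1"
  proof -
    have "M / (real L * Y) = infsum (\<lambda>e. mu e / real e ^ 2 * (1 / (real L * Y))) (NC L)"
      unfolding M_def infsum_cmult_left' by simp
    also have "\<dots> = infsum (\<lambda>e. mu e / real e ^ 3 * P e) E1"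
    proof (rule infsum_cong_neutral)
      fix e assume "e \<in> E1 - NC L" then show "mu e / real e ^ 3 * P e = 0"
        by (auto simp: E1_def NC_def P_def)
    next
      fix e assume "e \<in> NC L - E1" then show "mu e / real e ^ 2 * (1 / (real L * Y)) = 0"
        by (auto simp: E1_def NC_def)
    next
      fix e assume "e \<in> NC L \<inter> E1"
      then have e1: "e \<ge> 1" "coprime e L" by (auto simp: NC_def)
      then show "mu e / real e ^ 2 * (1 / (real L * Y)) = mu e / real e ^ 3 * P e"
        by (simp add: P_def power2_eq_square power3_eq_cube)
    qed
    finally show ?thesis .
  qed
  have diff: "F - M / (real L * Y) = infsum (\<lambda>e. mu e / real e ^ 3 * (T e - P e)) E1"
    unfolding swap mainsum using infsum_diff_real[OF s1 s2] by (simp add: right_diff_distrib)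
  define B where "B = (\<lambda>e::nat. if real e \<le> Y then 2 / (real e * Y ^ 2) else 3 / (Y * real e ^ 2))"
  have Bnn: "B e \<ge> 0" for e unfolding B_def using Ypos by auto
  have Bbd: "\<bar>B e\<bar> \<le> 5 / real e ^ 2" if "e \<in> E1" for e
  proof -
    have e1: "real e \<ge> 1" using that by (simp add: E1_def)
    show ?thesis
    proof (cases "real e \<le> Y")
      case True
      have "real e * real e \<le> real e * Y ^ 2"
      proof (rule mult_left_mono)
        have "Y \<le> Y * Y" using Y by simp
        then show "real e \<le> Y ^ 2" using True by (simp add: power2_eq_square)
      qed simp
      then have "2 / (real e * Y ^ 2) \<le> 2 / (real e * real e)"
        using e1 by (intro divide_left_mono mult_pos_pos) auto
      also have "\<dots> \<le> 5 / real e ^ 2" by (simp add: power2_eq_square divide_right_mono)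
      finally show ?thesis using True Bnn[of e] by (simp add: B_def)
    next
      case False
      have "3 / (Y * real e ^ 2) \<le> 3 / (1 * real e ^ 2)"
        using e1 Y by (intro divide_left_mono mult_right_mono mult_pos_pos) auto
      also have "\<dots> \<le> 5 / real e ^ 2" by (simp add: divide_right_mono)
      finally show ?thesis using False Bnn[of e] by (simp add: B_def)
    qed
  qed
  have sB: "B summable_on E1" by (rule summable_by_inv_sq[where C=5]) (rule Bbd)
  have ptw: "\<bar>mu e / real e ^ 3 * (T e - P e)\<bar> \<le> B e" if e1: "e \<in> E1" for e
  proof (cases "coprime e L")
    case False
    have emp: "{k. 1 \<le> k \<and> e * k \<in> A} = {}"
    proof (rule ccontr)
      assume "{k. 1 \<le> k \<and> e * k \<in> A} \<noteq> {}"
      then obtain k where "e * k \<in> A" by auto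
      then have "[e * k = b] (mod L)" by (simp add: A_def)
      then have "coprime (e * k) L" using b coprime_cong_cong_left by blast
      then show False using False by simp
    qed
    have "T e = 0" unfolding T_def emp by simp
    moreover have "P e = 0" using False by (simp add: P_def)
    ultimately show ?thesis using Bnn[of e] by simp
  next
    case True
    have e1': "e \<ge> 1" using e1 by (simp add: E1_def)
    obtain c where c: "{k. 1 \<le> k \<and> 1 \<le> e * k \<and> Y \<le> real (e * k) \<and> [e * k = b] (mod L)}
                  = {k. 1 \<le> k \<and> Y / real e \<le> real k \<and> [k = c] (mod L)}"
      using class_shift[OF L e1' True, of Y b] by blast
    have Teq: "T e = infsum (\<lambda>k. 1 / real k ^ 2) {k. 1 \<le> k \<and> Y / real e \<le> real k \<and> [k = c] (mod L)}"
      unfolding T_def A_def c[symmetric] by simp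
    have Peq: "P e = 1 / (real L * (Y / real e))" using True e1' by (simp add: P_def)
    have Zp: "Y / real e > 0" using Ypos e1' by simp
    have tail: "\<bar>T e - P e\<bar> \<le> (if Y / real e \<ge> 1 then 2 / (Y / real e) ^ 2 else 3 / (Y / real e))"
      unfolding Teq Peq by (rule class_tail2[OF L Zp])
    have "\<bar>mu e / real e ^ 3 * (T e - P e)\<bar> = \<bar>mu e\<bar> * (\<bar>T e - P e\<bar> / real e ^ 3)"
      by (simp add: abs_mult abs_div_pos)
    also have "\<dots> \<le> 1 * (\<bar>T e - P e\<bar> / real e ^ 3)"
      by (rule mult_right_mono[OF abs_mu_le]) simp
    also have "\<dots> \<le> (if Y / real e \<ge> 1 then 2 / (Y / real e) ^ 2 else 3 / (Y / real e)) / real e ^ 3"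
      using tail by (simp add: divide_right_mono)
    also have "\<dots> = B e"
    proof (cases "real e \<le> Y")
      case True
      then have "Y / real e \<ge> 1" using e1' by (simp add: le_divide_eq)
      then show ?thesis using True e1' Ypos by (simp add: B_def power2_eq_square power3_eq_cube field_simps)
    next
      case False
      then have "\<not> Y / real e \<ge> 1" using e1' by (simp add: le_divide_eq)
      then show ?thesis using False e1' Ypos by (simp add: B_def power2_eq_square power3_eq_cube field_simps)
    qed
    finally show ?thesis .
  qed
  have sabs: "(\<lambda>e. \<bar>mu e / real e ^ 3 * (T e - P e)\<bar>) summable_on E1"
  proof (rule summable_by_inv_sq[where C=5])
    fix e assume "e \<in> E1"
    then show "\<bar>\<bar>mu e / real e ^ 3 * (T e - P e)\<bar>\<bar> \<le> 5 / real e ^ 2"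
      using ptw[of e] Bbd[of e] by simp
  qed
  have sumB: "infsum B E1 \<le> (2 * (1 + ln Y) + 6) / Y ^ 2"
  proof -
    define n where "n = nat \<lfloor>Y\<rfloor>"
    have nY: "real n \<le> Y" "Y < real n + 1" using Y unfolding n_def by linarith+
    have n1: "n \<ge> 1" using nY Y by linarith
    have En: "E1 = {1..n} \<union> {e. n + 1 \<le> e}" by (auto simp: E1_def)
    have s1': "B summable_on {1..n}" by simp
    have s2': "B summable_on {e. n + 1 \<le> e}" by (rule summable_on_subset[OF sB]) (auto simp: E1_def)
    have "infsum B E1 = infsum B {1..n} + infsum B {e. n + 1 \<le> e}"
      unfolding En by (rule infsum_Un_disjoint[OF s1' s2']) auto
    also have "infsum B {1..n} = (\<Sum>e\<in>{1..n}. 2 / Y ^ 2 * (1 / real e))"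
    proof -
      have "infsum B {1..n} = sum B {1..n}" by simp
      also have "\<dots> = (\<Sum>e\<in>{1..n}. 2 / Y ^ 2 * (1 / real e))"
      proof (rule sum.cong[OF refl])
        fix e assume "e \<in> {1..n}"
        then have "real e \<le> Y" using nY by auto
        then show "B e = 2 / Y ^ 2 * (1 / real e)" by (simp add: B_def)
      qed
      finally show ?thesis .
    qed
    also have "\<dots> = 2 / Y ^ 2 * (\<Sum>e\<in>{1..n}. 1 / real e)" by (simp add: sum_distrib_left)
    also have "\<dots> \<le> 2 / Y ^ 2 * (1 + ln Y)"
    proof (rule mult_left_mono)
      have "ln (real n) \<le> ln Y" using n1 nY by simp
      then show "(\<Sum>e\<in>{1..n}. 1 / real e) \<le> 1 + ln Y" using harm_le_ln[OF n1] by linarith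
    qed simp
    also have "infsum B {e. n + 1 \<le> e} = infsum (\<lambda>e. 3 / Y * (1 / real e ^ 2)) {e. n + 1 \<le> e}"
    proof (rule infsum_cong)
      fix e assume "e \<in> {e. n + 1 \<le> e}"
      then have "\<not> real e \<le> Y" using nY by auto
      then show "B e = 3 / Y * (1 / real e ^ 2)" by (simp add: B_def)
    qed
    also have "\<dots> = 3 / Y * infsum (\<lambda>e. 1 / real e ^ 2) {e. n + 1 \<le> e}"
      by (rule infsum_cmult_right')
    also have "\<dots> \<le> 3 / Y * (1 / real n)"
      using tail_inv_sq[OF n1] Ypos by (intro mult_left_mono) auto
    also have "3 / Y * (1 / real n) \<le> 6 / Y ^ 2"
    proof -
      have "Y \<le> 2 * real n" using nY Y by linarith
      then have "3 / Y * (1 / real n) \<le> 3 / Y * (2 / Y)"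
        using Ypos n1 by (intro mult_left_mono) (auto simp: divide_simps)
      also have "\<dots> = 6 / Y ^ 2" by (simp add: power2_eq_square)
      finally show ?thesis .
    qed
    finally show ?thesis by (simp add: add_divide_distrib)
  qed
  have "\<bar>F - M / (real L * Y)\<bar> \<le> infsum (\<lambda>e. \<bar>mu e / real e ^ 3 * (T e - P e)\<bar>) E1"
    unfolding diff using Infinite_Sum.norm_infsum_bound[of "\<lambda>e. mu e / real e ^ 3 * (T e - P e)" E1] sabs
    by simp
  also have "\<dots> \<le> infsum B E1" by (rule infsum_mono[OF sabs sB ptw])
  also have "\<dots> \<le> (2 * (1 + ln Y) + 6) / Y ^ 2" by (rule sumB)
  finally have est: "\<bar>F - M / (real L * Y)\<bar> \<le> (2 * (1 + ln Y) + 6) / Y ^ 2" .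
  have "\<bar>Y * F - M / real L\<bar> = Y * \<bar>F - M / (real L * Y)\<bar>"
  proof -
    have "Y * F - M / real L = Y * (F - M / (real L * Y))" using Ypos by (simp add: field_simps)
    then show ?thesis using Ypos by (simp add: abs_mult)
  qed
  also have "\<dots> \<le> Y * ((2 * (1 + ln Y) + 6) / Y ^ 2)" using est Ypos by (intro mult_left_mono) auto
  also have "\<dots> = (8 + 2 * ln Y) / Y" using Ypos by (simp add: power2_eq_square field_simps)
  also have "\<dots> \<le> 10 * (ln Y / Y)"
  proof -
    have "exp 1 \<le> Y" using exp_le Y by linarith
    then have "1 \<le> ln Y" using ln_le_cancel_iff[of "exp 1" Y] Ypos by simp
    then have "8 + 2 * ln Y \<le> 10 * ln Y" by linarith
    then show ?thesis using Ypos by (simp add: divide_right_mono)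
  qed
  finally show ?thesis unfolding main[symmetric] F_def A_def Zt_def .
qed


lemma powi_nonneg: "(x::'a::linordered_field) \<ge> 0 \<Longrightarrow> x powi n \<ge> 0"
  unfolding power_int_def by auto

lemma padic_abs_nonneg: "padic_abs p a \<ge> 0"
  unfolding padic_abs_def by (auto intro: powi_nonneg)

lemma padic_val_props:
  assumes a: "a \<in> qp_space p" and nz: "a \<noteq> padic_zero"
  shows "a (padic_val a) \<noteq> 0" "\<And>n. n < padic_val a \<Longrightarrow> a n = 0"
proof -
  obtain N where N: "\<And>n. n < N \<Longrightarrow> a n = 0" using a by (auto simp: qp_space_def)
  obtain n0 where n0: "a n0 \<noteq> 0" using nz by (auto simp: padic_zero_def)
  have n0N: "N \<le> n0" using N[of n0] n0 by (meson not_less)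
  define k0 where "k0 = (LEAST k::nat. a (N + int k) \<noteq> 0)"
  have ex: "a (N + int (nat (n0 - N))) \<noteq> 0" using n0 n0N by simp
  have k0: "a (N + int k0) \<noteq> 0" unfolding k0_def by (rule LeastI[of "\<lambda>k. a (N + int k) \<noteq> 0" "nat (n0 - N)", OF ex])
  have k0min: "a (N + int k) = 0" if "k < k0" for k
    using not_less_Least[of k "\<lambda>k. a (N + int k) \<noteq> 0"] that unfolding k0_def by blast
  have below: "a n = 0" if "n < N + int k0" for n
  proof (cases "n < N")
    case True then show ?thesis by (rule N)
  next
    case False
    then have "n = N + int (nat (n - N))" "nat (n - N) < k0" using that by auto
    then show ?thesis using k0min by metis
  qed
  have "padic_val a = N + int k0"
    unfolding padic_val_def
  proof (rule Least_equality)
    show "a (N + int k0) \<noteq> 0" by (rule k0)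
    fix y assume "a y \<noteq> 0" then show "N + int k0 \<le> y" using below[of y] by (meson not_less)
  qed
  then show "a (padic_val a) \<noteq> 0" "\<And>n. n < padic_val a \<Longrightarrow> a n = 0" using k0 below by auto
qed

lemma padic_abs_eq:
  assumes "a \<noteq> padic_zero"
  shows "padic_abs p a = of_nat p powi (- padic_val a)"
  using assms by (simp add: padic_abs_def)

definition tnat :: "padic \<Rightarrow> nat \<Rightarrow> int \<Rightarrow> nat \<Rightarrow> nat" where
  "tnat a p v J = (\<Sum>i<J. a (v + int i) * p ^ i)"

lemma tnat_cong:
  assumes "j \<le> J"
  shows "[tnat a p v J = tnat a p v j] (mod p ^ j)"
  using assms
proof (induction J rule: dec_induct)
  case base then show ?case by simp
next
  case (step J)
  have "tnat a p v (Suc J) = tnat a p v J + a (v + int J) * p ^ J" by (simp add: tnat_def)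
  moreover have "[a (v + int J) * p ^ J = 0] (mod p ^ j)"
    using step(1) by (simp add: cong_0_iff le_imp_power_dvd)
  ultimately show ?case using cong_add[OF step(3), of "a (v + int J) * p ^ J" 0] by simp
qed

lemma padic_trunc_eq:
  assumes p: "p > 0" and a: "a \<in> qp_space p" and nz: "a \<noteq> padic_zero" and NV: "padic_val a \<le> N"
  shows "padic_trunc p N a = of_nat p powi (padic_val a) * of_nat (tnat a p (padic_val a) (nat (N - padic_val a)))"
proof -
  define v where "v = padic_val a"
  have zero: "\<And>n. n < v \<Longrightarrow> a n = 0" using padic_val_props[OF a nz] by (simp add: v_def)
  have "padic_trunc p N a = (\<Sum>n\<in>{v..<N}. of_nat (a n) * of_nat p powi n)"
    unfolding padic_trunc_def
  proof (rule sum.mono_neutral_left)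
    show "finite {v..<N}" by simp
    show "{n. n < N \<and> a n \<noteq> 0} \<subseteq> {v..<N}"
    proof
      fix n assume n: "n \<in> {n. n < N \<and> a n \<noteq> 0}"
      then have "\<not> n < v" using zero[of n] by auto
      then show "n \<in> {v..<N}" using n by auto
    qed
    show "\<forall>i\<in>{v..<N} - {n. n < N \<and> a n \<noteq> 0}. of_nat (a i) * of_nat p powi i = (0::rat)" by auto
  qed
  also have "\<dots> = (\<Sum>i<nat (N - v). of_nat (a (v + int i)) * of_nat p powi (v + int i))"
    by (rule sum.reindex_bij_witness[where j = "\<lambda>n. nat (n - v)" and i = "\<lambda>i. v + int i"]) auto
  also have "\<dots> = (\<Sum>i<nat (N - v). of_nat p powi v * (of_nat (a (v + int i)) * of_nat p ^ i))"
  proof (rule sum.cong[OF refl])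
    fix i
    have "(of_nat p :: rat) powi (v + int i) = of_nat p powi v * of_nat p powi (int i)"
      using p by (intro power_int_add) simp
    then show "of_nat (a (v + int i)) * of_nat p powi (v + int i) = of_nat p powi v * (of_nat (a (v + int i)) * (of_nat p :: rat) ^ i)"
      by simp
  qed
  also have "\<dots> = of_nat p powi v * of_nat (tnat a p v (nat (N - v)))"
    by (simp add: tnat_def sum_distrib_left)
  finally show ?thesis by (simp add: v_def)
qed

lemma in_LZp_iff:
  assumes p: "prime p" and L: "L = p ^ k" and V: "V \<noteq> 0" "\<not> int p dvd V"
  shows "in_LZp p L (of_int A / of_int V) \<longleftrightarrow> int L dvd A"
proof
  assume "int L dvd A" then show "in_LZp p L (of_int A / of_int V)"
    unfolding in_LZp_def using V by blast
next
  assume "in_LZp p L (of_int A / of_int V)"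
  then obtain u w :: int where uw: "w \<noteq> 0" "\<not> int p dvd w" "int L dvd u" "of_int A / of_int V = (of_int u / of_int w :: rat)"
    unfolding in_LZp_def by blast
  have "(of_int A :: rat) * of_int w = of_int u * of_int V" using uw(1,4) V(1) by (simp add: divide_eq_eq field_simps)
  then have eq: "A * w = u * V" by (metis of_int_eq_iff of_int_mult)
  have "int L dvd A * w" unfolding eq using uw(3) by simp
  moreover have "coprime (int L) w"
  proof -
    have "prime (int p)" using p by simp
    then have "coprime (int p) w" using uw(2) by (simp add: prime_imp_coprime)
    then show ?thesis unfolding L by simp
  qed
  ultimately show "int L dvd A" using coprime_dvd_mult_left_iff by blast
qed


lemma prime_not_dvd_other_power:
  fixes p q :: nat
  assumes "prime p" "prime q" "p \<noteq> q"
  shows "\<not> int p dvd int q ^ n"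
proof
  assume "int p dvd int q ^ n"
  then have "p dvd q ^ n" by (metis of_nat_dvd_iff of_nat_power)
  then have "p dvd q" using assms(1) prime_dvd_power by blast
  then show False using assms primes_dvd_imp_eq by blast
qed

lemma prod_powi_other:
  fixes Q :: "nat set" and e :: "nat \<Rightarrow> int" and p :: nat
  assumes "finite Q" "\<forall>q\<in>Q. prime q" "prime p" "p \<notin> Q"
  shows "\<exists>U V :: int. U > 0 \<and> V > 0 \<and> \<not> int p dvd U \<and> \<not> int p dvd V \<and>
           (\<Prod>q\<in>Q. (of_nat q :: rat) powi e q) = of_int U / of_int V"
  using assms
proof (induction Q rule: finite_induct)
  case empty
  show ?case by (rule exI[of _ 1], rule exI[of _ 1]) (use empty in \<open>auto simp: prime_gt_1_nat\<close>)
next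
  case (insert q Q)
  obtain U V :: int where UV: "U > 0" "V > 0" "\<not> int p dvd U" "\<not> int p dvd V"
    "(\<Prod>q\<in>Q. (of_nat q :: rat) powi e q) = of_int U / of_int V" using insert by auto
  have pq: "p \<noteq> q" "prime q" using insert by auto
  have pp: "prime (int p)" using insert by simp
  have prodeq: "(\<Prod>q\<in>insert q Q. (of_nat q :: rat) powi e q) = (of_nat q powi e q) * (of_int U / of_int V)"
    using insert UV by simp
  have q0: "q > 0" using pq prime_gt_0_nat by blast
  show ?case
  proof (cases "e q \<ge> 0")
    case True
    have "(of_nat q :: rat) powi e q = of_int (int q ^ nat (e q))"
      using True by (simp add: power_int_nonneg_exp)
    then have "(\<Prod>q\<in>insert q Q. (of_nat q :: rat) powi e q) = of_int (U * int q ^ nat (e q)) / of_int V"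
      using prodeq by simp
    moreover have "\<not> int p dvd U * int q ^ nat (e q)"
      using UV(3) prime_not_dvd_other_power[OF insert(5) pq(2) pq(1)] pp by (simp add: prime_dvd_mult_iff)
    moreover have "U * int q ^ nat (e q) > 0" using UV q0 by simp
    ultimately show ?thesis using UV by blast
  next
    case False
    have "(of_nat q :: rat) powi e q = 1 / of_int (int q ^ nat (- e q))"
    proof -
      have "(of_nat q :: rat) powi e q = (of_nat q :: rat) powi (- (- e q))" by simp
      also have "\<dots> = inverse ((of_nat q :: rat) powi (- e q))" by (rule power_int_minus)
      also have "(of_nat q :: rat) powi (- e q) = of_nat q ^ nat (- e q)" using False by (simp add: power_int_nonneg_exp)
      finally show ?thesis by (simp add: divide_inverse)
    qed
    then have "(\<Prod>q\<in>insert q Q. (of_nat q :: rat) powi e q) = of_int U / of_int (V * int q ^ nat (- e q))"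
      using prodeq by simp
    moreover have "\<not> int p dvd V * int q ^ nat (- e q)"
      using UV(4) prime_not_dvd_other_power[OF insert(5) pq(2) pq(1)] pp by (simp add: prime_dvd_mult_iff)
    moreover have "V * int q ^ nat (- e q) > 0" using UV q0 by simp
    ultimately show ?thesis using UV by blast
  qed
qed


lemma padic_cong_char:
  fixes p L k :: nat and a :: padic and s U V :: int and c :: rat
  assumes p: "prime p" and L: "L = p ^ k" "k \<ge> 1" and a: "a \<in> qp_space p" "a \<noteq> padic_zero"
    and s: "s = 1 \<or> s = -1" and UV: "V > 0" "\<not> int p dvd U" "\<not> int p dvd V"
    and c: "c = of_int s * (of_nat p powi (- padic_val a)) * (of_int U / of_int V)"
  shows "\<exists>\<beta>::int. \<not> int p dvd \<beta> \<and> (\<forall>m::int. padic_cong p L a c m \<longleftrightarrow> [m = \<beta>] (mod int L))"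
proof -
  define v where "v = padic_val a"
  define T where "T = int (tnat a p v k)"
  have p0: "p > 0" using p prime_gt_0_nat by blast
  have pp: "prime (int p)" using p by simp
  have pv: "(of_nat p :: rat) powi (- v) * of_nat p powi v = 1"
  proof -
    have "(of_nat p :: rat) powi (- v) = inverse (of_nat p powi v)" by (rule power_int_minus)
    moreover have "(of_nat p :: rat) powi v \<noteq> 0" using p0 by simp
    ultimately show ?thesis by simp
  qed
  have tc: "[int (tnat a p v J) = T] (mod int L)" if "k \<le> J" for J
    unfolding T_def L using tnat_cong[OF that, of a p v] cong_int_iff[of "tnat a p v J" "tnat a p v k" "p ^ k"] by simp
  have key: "in_LZp p L (c * padic_trunc p (int N) a - of_int m) \<longleftrightarrow> int L dvd (s * U * T - m * V)"
    if N: "v + int k \<le> int N" for N :: nat and m :: int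
  proof -
    define J where "J = nat (int N - v)"
    have kJ: "k \<le> J" using N by (simp add: J_def)
    define t where "t = int (tnat a p v J)"
    have tr: "padic_trunc p (int N) a = of_nat p powi v * of_int t"
      unfolding t_def J_def v_def using padic_trunc_eq[OF p0 a] N L(2) by (simp add: v_def)
    have "c * padic_trunc p (int N) a - of_int m = of_int s * (of_nat p powi (- v) * of_nat p powi v) * (of_int U / of_int V) * of_int t - of_int m"
      unfolding c tr v_def by (simp add: ac_simps)
    also have "\<dots> = of_int (s * U * t - m * V) / of_int V"
      unfolding pv using UV(1) by (simp add: field_simps)
    finally have eq: "c * padic_trunc p (int N) a - of_int m = of_int (s * U * t - m * V) / of_int V" .
    have "in_LZp p L (c * padic_trunc p (int N) a - of_int m) \<longleftrightarrow> int L dvd (s * U * t - m * V)"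
      unfolding eq by (rule in_LZp_iff[OF p L(1)]) (use UV in auto)
    also have "\<dots> \<longleftrightarrow> int L dvd (s * U * T - m * V)"
    proof -
      have "[s * U * t - m * V = s * U * T - m * V] (mod int L)"
        using tc[OF kJ] unfolding t_def by (intro cong_diff cong_mult cong_refl) auto
      then show ?thesis using cong_dvd_iff by blast
    qed
    finally show ?thesis .
  qed
  have pc_iff: "padic_cong p L a c m \<longleftrightarrow> int L dvd (s * U * T - m * V)" for m :: int
  proof
    assume "padic_cong p L a c m"
    then obtain N0 where N0: "\<And>N. N \<ge> N0 \<Longrightarrow> in_LZp p L (c * padic_trunc p (int N) a - of_int m)"
      unfolding padic_cong_def eventually_sequentially by blast
    define N where "N = max N0 (nat (v + int k))"
    have "v + int k \<le> int N" unfolding N_def by linarith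
    then show "int L dvd (s * U * T - m * V)" using key N0[of N] by (simp add: N_def)
  next
    assume h: "int L dvd (s * U * T - m * V)"
    show "padic_cong p L a c m" unfolding padic_cong_def eventually_sequentially
    proof (intro exI allI impI)
      fix N assume "nat (v + int k) \<le> N"
      then have "v + int k \<le> int N" by linarith
      then show "in_LZp p L (c * padic_trunc p (int N) a - of_int m)" using key h by blast
    qed
  qed
  have copV: "coprime V (int L)"
  proof -
    have "coprime (int p) V" using pp UV(3) by (simp add: prime_imp_coprime)
    then show ?thesis unfolding L by (simp add: coprime_commute)
  qed
  obtain V' where V': "[V * V' = 1] (mod int L)" using cong_solve_coprime_int[OF copV] by blast
  define \<beta> where "\<beta> = s * U * T * V'"
  have iff: "int L dvd (s * U * T - m * V) \<longleftrightarrow> [m = \<beta>] (mod int L)" for m :: int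
  proof -
    have "int L dvd (s * U * T - m * V) \<longleftrightarrow> [m * V = s * U * T] (mod int L)"
      by (simp add: cong_iff_dvd_diff dvd_diff_commute)
    also have "\<dots> \<longleftrightarrow> [m = \<beta>] (mod int L)"
    proof
      assume h: "[m * V = s * U * T] (mod int L)"
      have "[m * V * V' = s * U * T * V'] (mod int L)" using h by (rule cong_scalar_right)
      moreover have "[m * V * V' = m * 1] (mod int L)"
        using cong_scalar_left[OF V', of m] by (simp add: ac_simps)
      ultimately show "[m = \<beta>] (mod int L)" unfolding \<beta>_def by (metis cong_sym cong_trans mult_1_right)
    next
      assume h: "[m = \<beta>] (mod int L)"
      have "[m * V = \<beta> * V] (mod int L)" using h by (rule cong_scalar_right)
      moreover have "[\<beta> * V = s * U * T * 1] (mod int L)"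
        unfolding \<beta>_def using cong_scalar_left[OF V', of "s * U * T"] by (simp add: ac_simps)
      ultimately show "[m * V = s * U * T] (mod int L)" by (metis cong_trans mult_1_right)
    qed
    finally show ?thesis .
  qed
  have nd: "\<not> int p dvd \<beta>"
  proof -
    have ns: "\<not> int p dvd s" using s p prime_gt_1_nat[OF p] by auto
    have nT: "\<not> int p dvd T"
    proof
      assume "int p dvd T"
      have "[tnat a p v k = tnat a p v 1] (mod p ^ 1)" by (rule tnat_cong) (use L in auto)
      moreover have "tnat a p v 1 = a v" by (simp add: tnat_def)
      ultimately have "[tnat a p v k = a v] (mod p)" by simp
      moreover have "p dvd tnat a p v k" using \<open>int p dvd T\<close> unfolding T_def by (metis of_nat_dvd_iff)
      ultimately have "p dvd a v" using cong_dvd_iff by blast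
      moreover have "a v < p" using a(1) by (auto simp: qp_space_def)
      moreover have "a v \<noteq> 0" using padic_val_props[OF a] by (simp add: v_def)
      ultimately show False by (meson nat_dvd_not_less not_gr0)
    qed
    have nV': "\<not> int p dvd V'"
    proof
      assume "int p dvd V'"
      then have "int p dvd V * V'" by simp
      moreover have "[V * V' = 1] (mod int p)"
        using V' by (rule cong_dvd_modulus) (use L in \<open>simp add: dvd_power\<close>)
      ultimately have "int p dvd 1" using cong_dvd_iff by blast
      then show False using pp by (simp add: prime_int_iff)
    qed
    show ?thesis unfolding \<beta>_def using ns UV(2) nT nV' pp by (simp add: prime_dvd_mult_iff)
  qed
  show ?thesis using nd pc_iff iff by blast
qed


lemma Lp_pow: "prime p \<Longrightarrow> \<exists>k\<ge>1. Lp p = p ^ k"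
  unfolding Lp_def by (cases "p = 2") (rule exI[of _ 3], simp, rule exI[of _ 1], simp)

lemma Lp_pos: "prime p \<Longrightarrow> Lp p > 0"
  using prime_gt_0_nat by (auto simp: Lp_def)

lemma p_dvd_Lp: "prime p \<Longrightarrow> p dvd Lp p"
  using Lp_pow[of p] by (auto simp: dvd_power)

lemma coprime_Lp_iff: "prime p \<Longrightarrow> coprime m (Lp p) \<longleftrightarrow> coprime m p"
  using Lp_pow[of p] by auto

lemma coprime_Lp_Lp: "prime p \<Longrightarrow> prime q \<Longrightarrow> p \<noteq> q \<Longrightarrow> coprime (Lp p) (Lp q)"
proof -
  assume pq: "prime p" "prime q" "p \<noteq> q"
  obtain i j where ij: "i \<ge> 1" "Lp p = p ^ i" "j \<ge> 1" "Lp q = q ^ j" using Lp_pow pq by metis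
  have "coprime p q" by (rule primes_coprime[OF pq])
  then show ?thesis using ij by simp
qed

lemma coprime_prod_iff:
  fixes f :: "nat \<Rightarrow> nat"
  assumes "finite A"
  shows "coprime m (\<Prod>i\<in>A. f i) \<longleftrightarrow> (\<forall>i\<in>A. coprime m (f i))"
proof
  assume h: "coprime m (\<Prod>i\<in>A. f i)"
  show "\<forall>i\<in>A. coprime m (f i)"
  proof
    fix i assume "i \<in> A"
    then have "f i dvd (\<Prod>i\<in>A. f i)" using assms by (intro dvd_prodI)
    then show "coprime m (f i)" using h coprime_divisors[of m m "f i"] by auto
  qed
next
  assume "\<forall>i\<in>A. coprime m (f i)" then show "coprime m (\<Prod>i\<in>A. f i)" by (intro prod_coprime_right) auto
qed

lemma coprime_LS_iff:
  assumes "finite Sf" "\<forall>p\<in>Sf. prime p"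
  shows "coprime m (LS Sf) \<longleftrightarrow> coprime m (\<Prod>Sf)"
proof -
  have "coprime m (LS Sf) \<longleftrightarrow> (\<forall>p\<in>Sf. coprime m (Lp p))"
    unfolding LS_def by (rule coprime_prod_iff[OF assms(1)])
  also have "\<dots> \<longleftrightarrow> (\<forall>p\<in>Sf. coprime m p)" using assms(2) coprime_Lp_iff by auto
  also have "\<dots> \<longleftrightarrow> coprime m (\<Prod>p\<in>Sf. p)" by (rule coprime_prod_iff[OF assms(1), symmetric])
  finally show ?thesis by simp
qed

lemma LS_pos: "finite Sf \<Longrightarrow> \<forall>p\<in>Sf. prime p \<Longrightarrow> LS Sf \<ge> 1"
  unfolding LS_def using Lp_pos by (simp add: Suc_le_eq prod_pos)

lemma Nx_char:
  fixes Sf :: "nat set" and x :: QS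
  assumes fin: "finite Sf" and pr: "\<forall>p\<in>Sf. prime p" and x0: "fst x \<noteq> 0"
    and xs: "\<forall>p\<in>Sf. snd x p \<in> qp_space p \<and> snd x p \<noteq> padic_zero"
  shows "\<exists>b. coprime b (LS Sf) \<and> Nx Sf x = {m. 1 \<le> m \<and> dS Sf x \<le> real m \<and> [m = b] (mod LS Sf)}"
proof -
  define s :: int where "s = (if fst x < 0 then -1 else 1)"
  define c :: rat where "c = (if fst x < 0 then -1 else 1) * (\<Prod>q\<in>Sf. padic_abs q (snd x q))"
  have each: "\<exists>\<beta>::int. \<not> int p dvd \<beta> \<and> (\<forall>m::int. padic_cong p (Lp p) (snd x p) c m \<longleftrightarrow> [m = \<beta>] (mod int (Lp p)))"
    if p: "p \<in> Sf" for p
  proof -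
    have pp: "prime p" using pr p by auto
    obtain k where k: "k \<ge> 1" "Lp p = p ^ k" using Lp_pow[OF pp] by blast
    have a: "snd x p \<in> qp_space p" "snd x p \<noteq> padic_zero" using xs p by auto
    obtain U V :: int where UV: "U > 0" "V > 0" "\<not> int p dvd U" "\<not> int p dvd V"
      "(\<Prod>q\<in>Sf - {p}. (of_nat q :: rat) powi (- padic_val (snd x q))) = of_int U / of_int V"
      using prod_powi_other[of "Sf - {p}" p "\<lambda>q. - padic_val (snd x q)"] fin pr pp by auto
    have "(\<Prod>q\<in>Sf. padic_abs q (snd x q)) = padic_abs p (snd x p) * (\<Prod>q\<in>Sf - {p}. padic_abs q (snd x q))"
      using fin p by (rule prod.remove)
    also have "(\<Prod>q\<in>Sf - {p}. padic_abs q (snd x q)) = (\<Prod>q\<in>Sf - {p}. (of_nat q :: rat) powi (- padic_val (snd x q)))"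
      using xs by (intro prod.cong refl) (auto simp: padic_abs_eq)
    finally have "c = of_int s * (of_nat p powi (- padic_val (snd x p))) * (of_int U / of_int V)"
      unfolding c_def s_def using UV(5) a(2) by (simp add: padic_abs_eq)
    then show ?thesis
      using padic_cong_char[OF pp k(2) k(1) a _ UV(2) UV(3) UV(4)] by (auto simp: s_def)
  qed
  then obtain \<beta> where \<beta>: "\<And>p. p \<in> Sf \<Longrightarrow> \<not> int p dvd \<beta> p \<and> (\<forall>m::int. padic_cong p (Lp p) (snd x p) c m \<longleftrightarrow> [m = \<beta> p] (mod int (Lp p)))"
    by metis
  define u where "u = (\<lambda>p. nat (\<beta> p mod int (Lp p)))"
  have ucong: "[int (u p) = \<beta> p] (mod int (Lp p))" if "p \<in> Sf" for p
  proof -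
    have "int (Lp p) > 0" using Lp_pos pr that by auto
    then have "int (u p) = \<beta> p mod int (Lp p)" unfolding u_def by simp
    then show ?thesis by (simp add: cong_def)
  qed
  have pc: "padic_cong p (Lp p) (snd x p) c (int m) \<longleftrightarrow> [m = u p] (mod Lp p)" if "p \<in> Sf" for p m
  proof -
    have "padic_cong p (Lp p) (snd x p) c (int m) \<longleftrightarrow> [int m = \<beta> p] (mod int (Lp p))" using \<beta>[OF that] by blast
    also have "\<dots> \<longleftrightarrow> [int m = int (u p)] (mod int (Lp p))"
      using ucong[OF that] by (meson cong_sym cong_trans)
    also have "\<dots> \<longleftrightarrow> [m = u p] (mod Lp p)" by (rule cong_int_iff)
    finally show ?thesis .
  qed
  have ucop: "coprime (u p) (Lp p)" if "p \<in> Sf" for p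
  proof -
    have pp: "prime p" using pr that by auto
    have "\<not> p dvd u p"
    proof
      assume "p dvd u p"
      then have "int p dvd int (u p)" by simp
      moreover have "[int (u p) = \<beta> p] (mod int p)"
        using ucong[OF that] by (rule cong_dvd_modulus) (use p_dvd_Lp[OF pp] in simp)
      ultimately have "int p dvd \<beta> p" using cong_dvd_iff by blast
      then show False using \<beta>[OF that] by blast
    qed
    then have "coprime (u p) p" using pp by (simp add: prime_imp_coprime coprime_commute)
    then show ?thesis using coprime_Lp_iff[OF pp] by simp
  qed
  have pw: "\<forall>i\<in>Sf. \<forall>j\<in>Sf. i \<noteq> j \<longrightarrow> coprime (Lp i) (Lp j)" using pr coprime_Lp_Lp by blast
  obtain b where b: "\<forall>p\<in>Sf. [b = u p] (mod Lp p)" using chinese_remainder_nat[OF fin pw, of u] by blast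
  have bcop: "coprime b (LS Sf)"
    unfolding LS_def
  proof (rule prod_coprime_right)
    fix p assume p: "p \<in> Sf"
    show "coprime b (Lp p)" using ucop[OF p] b p coprime_cong_cong_left by (metis cong_sym)
  qed
  have condLS: "(\<forall>p\<in>Sf. [m = u p] (mod Lp p)) \<longleftrightarrow> [m = b] (mod LS Sf)" for m
  proof
    assume h: "\<forall>p\<in>Sf. [m = u p] (mod Lp p)"
    have "[m = b] (mod (\<Prod>p\<in>Sf. Lp p))"
    proof (rule coprime_cong_prod_nat)
      show "coprime (Lp i) (Lp j)" if "i \<in> Sf" "j \<in> Sf" "i \<noteq> j" for i j using pw that by blast
      show "[m = b] (mod Lp i)" if "i \<in> Sf" for i
      proof -
        have "[m = u i] (mod Lp i)" "[b = u i] (mod Lp i)" using h b that by auto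
        then show ?thesis by (meson cong_sym cong_trans)
      qed
    qed
    then show "[m = b] (mod LS Sf)" by (simp add: LS_def)
  next
    assume h: "[m = b] (mod LS Sf)"
    show "\<forall>p\<in>Sf. [m = u p] (mod Lp p)"
    proof
      fix p assume p: "p \<in> Sf"
      have "Lp p dvd LS Sf" unfolding LS_def using fin p by (intro dvd_prodI)
      then have "[m = b] (mod Lp p)" using h cong_dvd_modulus_nat by blast
      then show "[m = u p] (mod Lp p)" using b p cong_trans by blast
    qed
  qed
  have "Nx Sf x = {m. 1 \<le> m \<and> dS Sf x \<le> real m \<and> [m = b] (mod LS Sf)}"
  proof (intro equalityI subsetI)
    fix m assume "m \<in> Nx Sf x"
    then have m: "m \<in> NS Sf" "dS Sf x \<le> real m" "\<forall>p\<in>Sf. padic_cong p (Lp p) (snd x p) c (int m)"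
      unfolding Nx_def c_def by auto
    have "\<forall>p\<in>Sf. [m = u p] (mod Lp p)" using m(3) pc by blast
    then have "[m = b] (mod LS Sf)" using condLS by blast
    moreover have "1 \<le> m" using m(1) by (simp add: NS_def)
    ultimately show "m \<in> {m. 1 \<le> m \<and> dS Sf x \<le> real m \<and> [m = b] (mod LS Sf)}" using m(2) by simp
  next
    fix m assume "m \<in> {m. 1 \<le> m \<and> dS Sf x \<le> real m \<and> [m = b] (mod LS Sf)}"
    then have m: "1 \<le> m" "dS Sf x \<le> real m" "[m = b] (mod LS Sf)" by auto
    have "coprime m (LS Sf)" using bcop m(3) coprime_cong_cong_left by (metis cong_sym)
    then have "coprime m (\<Prod>Sf)" using coprime_LS_iff[OF fin pr] by simp
    then have "m \<in> NS Sf" using m(1) by (simp add: NS_def)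
    moreover have "\<forall>p\<in>Sf. padic_cong p (Lp p) (snd x p) c (int m)" using condLS[of m] m(3) pc by blast
    ultimately show "m \<in> Nx Sf x" using m(2) unfolding Nx_def c_def by auto
  qed
  then show ?thesis using bcop by blast
qed


lemma suminf_if_infsum:
  fixes f :: "nat \<Rightarrow> real"
  assumes f: "\<And>m. 0 \<le> f m" "\<And>m. f m \<le> 1 / real m ^ 2"
  shows "(\<Sum>m. if m \<in> S then f m else 0) = infsum f S"
    and "0 \<le> (\<Sum>m. if m \<in> S then f m else 0)"
    and "(\<Sum>m. if m \<in> S then f m else 0) \<le> (\<Sum>m. 1 / real m ^ 2)"
proof -
  define g where "g = (\<lambda>m. if m \<in> S then f m else 0)"
  have gb: "0 \<le> g m" "g m \<le> 1 / real m ^ 2" for m using f[of m] by (auto simp: g_def)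
  have sg: "summable g"
    by (rule summable_comparison_test'[OF summable_inv_sq, of 0]) (use gb in auto)
  have "(g has_sum suminf g) UNIV" by (rule sums_nonneg_imp_has_sum[OF summable_sums[OF sg]]) (use gb in auto)
  then have "infsum g UNIV = suminf g" by (rule infsumI)
  moreover have "infsum g UNIV = infsum f S" by (rule infsum_cong_neutral) (auto simp: g_def)
  ultimately show "(\<Sum>m. if m \<in> S then f m else 0) = infsum f S" by (simp add: g_def)
  show "0 \<le> (\<Sum>m. if m \<in> S then f m else 0)" using suminf_nonneg[OF sg] gb by (simp add: g_def)
  show "(\<Sum>m. if m \<in> S then f m else 0) \<le> (\<Sum>m. 1 / real m ^ 2)"
    using suminf_le[OF _ sg summable_inv_sq] gb by (simp add: g_def)
qed

lemma totient_cube_bounds: "0 \<le> real (totient m) / real m ^ 3" "real (totient m) / real m ^ 3 \<le> 1 / real m ^ 2"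
proof -
  show "0 \<le> real (totient m) / real m ^ 3" by simp
  show "real (totient m) / real m ^ 3 \<le> 1 / real m ^ 2"
  proof (cases "m = 0")
    case True then show ?thesis by simp
  next
    case False
    have "real (totient m) / real m ^ 3 \<le> real m / real m ^ 3"
      by (intro divide_right_mono) (auto simp: totient_le)
    also have "\<dots> = 1 / real m ^ 2" using False by (simp add: power2_eq_square power3_eq_cube)
    finally show ?thesis .
  qed
qed

lemma dS_nonneg: "dS Sf x \<ge> 0"
  unfolding dS_def by (intro mult_nonneg_nonneg prod_nonneg) (auto simp: padic_abs_nonneg)

lemma space_QS:
  assumes "x \<in> space (QS_measure Sf)" "p \<in> Sf"
  shows "snd x p \<in> qp_space p"
proof -
  have "snd x \<in> space (PiM Sf padic_measure)" using assms(1) by (auto simp: QS_measure_def space_pair_measure)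
  then have "snd x p \<in> space (padic_measure p)" using assms(2) by (auto simp: space_PiM)
  then show ?thesis by (simp add: padic_measure_def qp_measurable_space_def space_restrict_space)
qed

lemma dS_pos_components:
  assumes "finite Sf" "dS Sf x > 0"
  shows "fst x \<noteq> 0" "\<forall>p\<in>Sf. snd x p \<noteq> padic_zero"
proof -
  show "fst x \<noteq> 0" using assms(2) by (auto simp: dS_def)
  show "\<forall>p\<in>Sf. snd x p \<noteq> padic_zero"
  proof (intro ballI notI)
    fix p assume p: "p \<in> Sf" "snd x p = padic_zero"
    then have "real_of_rat (padic_abs p (snd x p)) = 0" by (simp add: padic_abs_def)
    then have "(\<Prod>p\<in>Sf. real_of_rat (padic_abs p (snd x p))) = 0" using assms(1) p(1) by (metis prod_zero_iff)
    then show False using assms(2) by (simp add: dS_def)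
  qed
qed

theorem corollary4p2:
  fixes Sf :: "nat set"
  assumes "finite Sf" and "\<forall>p\<in>Sf. prime p"
  shows "\<exists>r0>0.
     (\<exists>B. \<forall>x\<in>space (QS_measure Sf). dS Sf x \<le> r0 \<longrightarrow> \<bar>PhiS Sf x\<bar> \<le> B) \<and>
     (\<exists>C. AE x in QS_measure Sf. dS Sf x > r0 \<longrightarrow>
        \<bar>PhiS Sf x - 1 / (real (LS Sf) * zetaS2 Sf)\<bar> \<le> C * (ln (dS Sf x) / dS Sf x))"
proof (rule exI[of _ "3::real"], intro conjI)
  note fin = assms(1) and pr = assms(2)
  show "(3::real) > 0" by simp
  define Zs where "Zs = (\<Sum>m. 1 / real m ^ 2 :: real)"
  have "\<forall>x\<in>space (QS_measure Sf). dS Sf x \<le> 3 \<longrightarrow> \<bar>PhiS Sf x\<bar> \<le> 3 * Zs"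
  proof (intro ballI impI)
    fix x assume x: "x \<in> space (QS_measure Sf)" "dS Sf x \<le> 3"
    have Zs0: "0 \<le> Zs" unfolding Zs_def by (intro suminf_nonneg summable_inv_sq) simp
    show "\<bar>PhiS Sf x\<bar> \<le> 3 * Zs"
    proof (cases "fst x = 0 \<or> (\<exists>p\<in>Sf. snd x p = padic_zero)")
      case True then show ?thesis using Zs0 by (simp add: PhiS_def)
    next
      case False
      note sb = suminf_if_infsum[of "\<lambda>m. real (totient m) / real m ^ 3" "Nx Sf x", OF totient_cube_bounds]
      have "PhiS Sf x = dS Sf x * (\<Sum>m. if m \<in> Nx Sf x then real (totient m) / real m ^ 3 else 0)"
        using False by (simp add: PhiS_def)
      moreover have "dS Sf x * (\<Sum>m. if m \<in> Nx Sf x then real (totient m) / real m ^ 3 else 0) \<le> 3 * Zs"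
        using sb(2,3) x(2) dS_nonneg[of Sf x] unfolding Zs_def by (intro mult_mono) auto
      moreover have "0 \<le> dS Sf x * (\<Sum>m. if m \<in> Nx Sf x then real (totient m) / real m ^ 3 else 0)"
        using sb(2) dS_nonneg[of Sf x] by simp
      ultimately show ?thesis by simp
    qed
  qed
  then show "\<exists>B. \<forall>x\<in>space (QS_measure Sf). dS Sf x \<le> 3 \<longrightarrow> \<bar>PhiS Sf x\<bar> \<le> B" by blast
  show "\<exists>C. AE x in QS_measure Sf. dS Sf x > 3 \<longrightarrow>
        \<bar>PhiS Sf x - 1 / (real (LS Sf) * zetaS2 Sf)\<bar> \<le> C * (ln (dS Sf x) / dS Sf x)"
  proof (intro exI[of _ "10::real"] AE_I2 impI)
    fix x assume x: "x \<in> space (QS_measure Sf)" and d3: "dS Sf x > 3"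
    have comps: "fst x \<noteq> 0" "\<forall>p\<in>Sf. snd x p \<noteq> padic_zero" using dS_pos_components[OF fin] d3 by auto
    have xs: "\<forall>p\<in>Sf. snd x p \<in> qp_space p \<and> snd x p \<noteq> padic_zero" using space_QS[OF x] comps by auto
    obtain b where b: "coprime b (LS Sf)" and Nxeq: "Nx Sf x = {m. 1 \<le> m \<and> dS Sf x \<le> real m \<and> [m = b] (mod LS Sf)}"
      using Nx_char[OF fin pr comps(1) xs] by blast
    have Phi: "PhiS Sf x = dS Sf x * infsum (\<lambda>m. real (totient m) / real m ^ 3) {m. 1 \<le> m \<and> dS Sf x \<le> real m \<and> [m = b] (mod LS Sf)}"
      using comps suminf_if_infsum(1)[of "\<lambda>m. real (totient m) / real m ^ 3" "Nx Sf x", OF totient_cube_bounds]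
      unfolding Nxeq[symmetric] by (simp add: PhiS_def)
    have NSeq: "NS Sf = NC (LS Sf)"
      using coprime_LS_iff[OF fin pr] by (auto simp: NS_def NC_def)
    have zeta: "zetaS2 Sf = infsum (\<lambda>m. 1 / real m ^ 2) (NC (LS Sf))"
      unfolding zetaS2_def NSeq[symmetric]
      by (rule suminf_if_infsum(1)) auto
    show "\<bar>PhiS Sf x - 1 / (real (LS Sf) * zetaS2 Sf)\<bar> \<le> 10 * (ln (dS Sf x) / dS Sf x)"
      unfolding Phi zeta by (rule core_estimate[OF LS_pos[OF fin pr] b]) (use d3 in simp)
  qed
qed


end
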